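(* Let $0<q<1$, $p=q^{1/2}$, $\alpha,\beta>-1$ real. Then $$\lim_{n\to\infty}x^n\,b_n^{(\alpha,\beta)}(1/x)=\Phi_{\alpha,\beta}(x),$$ uniformly on compact subsets of the complex $x$-plane (for $x=0$ the left side is interpreted as the value at $0$ of the polynomial $x^nb_n^{(\alpha,\beta)}(1/x)$).
   Context: Notation: $(a;p)_0=1$, $(a;p)_n=\prod_{j=0}^{n-1}(1-ap^j)$, $(a;p)_\infty=\prod_{j\ge0}(1-ap^j)$, $(a_1,\dots,a_m;p)_n=\prod_k(a_k;p)_n$; ${}_2\phi_1(a,b;c;p,z)=\sum_{k\ge0}\frac{(a,b;p)_k}{(p,c;p)_k}z^k$. The polynomials $b_n=b_n^{(\alpha,\beta)}$ are defined by $b_{-1}(\mu)=0$, $b_0(\mu)=1$, and for $k\ge0$ $$b_{k+1}(\mu)=\Big[\mu+\frac{(1-p^{\beta-\alpha})(1+p^{\alpha+\beta+3+2k})}{(1-p^{\alpha+\beta+2+2k})(1-p^{\alpha+\beta+4+2k})}p^{\alpha+3/2+k}\Big]b_k(\mu)+\frac{(1-p^{2\alpha+2+2k})(1-p^{2\beta+2+2k})\,p^{2k+\alpha+\beta+2}}{(1-p^{\alpha+\beta+1+2k})(1-p^{\alpha+\beta+2+2k})^2(1-p^{\alpha+\beta+3+2k})}\,b_{k-1}(\mu).$$ The entire function $\Phi_{\alpha,\beta}$ is $$\Phi_{\alpha,\beta}(y)=\frac{(p^{\beta+1};p)_\infty}{(p^{\alpha+\beta+2};p)_\infty}\sum_{k\ge0}\frac{(p^{\alpha+1},p^{1/2}y;p)_k}{(p;p)_k}\,p^{(\beta+1)k}\,(-p^{\alpha+3/2+k}y;p)_\infty,$$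 which equals $\frac{(p^{\beta+1},-p^{\alpha+3/2}y;p)_\infty}{(p^{\alpha+\beta+2};p)_\infty}{}_2\phi_1(p^{\alpha+1},p^{1/2}y;-p^{\alpha+3/2}y;p,p^{\beta+1})$ wherever the latter is defined. *)

theory Defs
  imports "HOL-Analysis.Analysis" "HOL-Computational_Algebra.Polynomial"
begin

definition qpoch :: "complex \<Rightarrow> complex \<Rightarrow> nat \<Rightarrow> complex" where
  "qpoch a p n = (\<Prod>j<n. 1 - a * p ^ j)"

definition qpoch_inf :: "complex \<Rightarrow> complex \<Rightarrow> complex" where
  "qpoch_inf a p = prodinf (\<lambda>j. 1 - a * p ^ j)"

definition bcoef_c :: "real \<Rightarrow> real \<Rightarrow> real \<Rightarrow> nat \<Rightarrow> real" where
  "bcoef_c p \<alpha> \<beta> k =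
     (1 - p powr (\<beta> - \<alpha>)) * (1 + p powr (\<alpha> + \<beta> + 3 + 2 * real k))
     / ((1 - p powr (\<alpha> + \<beta> + 2 + 2 * real k)) * (1 - p powr (\<alpha> + \<beta> + 4 + 2 * real k)))
     * p powr (\<alpha> + 3/2 + real k)"

definition bcoef_d :: "real \<Rightarrow> real \<Rightarrow> real \<Rightarrow> nat \<Rightarrow> real" where
  "bcoef_d p \<alpha> \<beta> k =
     (1 - p powr (2 * \<alpha> + 2 + 2 * real k)) * (1 - p powr (2 * \<beta> + 2 + 2 * real k))
       * p powr (2 * real k + \<alpha> + \<beta> + 2)
     / ((1 - p powr (\<alpha> + \<beta> + 1 + 2 * real k)) * (1 - p powr (\<alpha> + \<beta> + 2 + 2 * real k)) ^ 2
        * (1 - p powr (\<alpha> + \<beta> + 3 + 2 * real k)))"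

text \<open>bpair p a b n = (b_{n-1}, b_n), with b_{-1} = 0 and b_0 = 1.\<close>
fun bpair :: "real \<Rightarrow> real \<Rightarrow> real \<Rightarrow> nat \<Rightarrow> complex poly \<times> complex poly" where
  "bpair p \<alpha> \<beta> 0 = (0, 1)"
| "bpair p \<alpha> \<beta> (Suc k) =
     (let (bm, bk) = bpair p \<alpha> \<beta> k in
       (bk, [:complex_of_real (bcoef_c p \<alpha> \<beta> k), 1:] * bk
            + smult (complex_of_real (bcoef_d p \<alpha> \<beta> k)) bm))"

definition bpoly :: "real \<Rightarrow> real \<Rightarrow> real \<Rightarrow> nat \<Rightarrow> complex poly" where
  "bpoly p \<alpha> \<beta> n = snd (bpair p \<alpha> \<beta> n)"

text \<open>The polynomial x^n b_n(1/x), written via the coefficients of b_n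
  (so that its value at x = 0 is the value of this polynomial at 0).\<close>
definition brev :: "real \<Rightarrow> real \<Rightarrow> real \<Rightarrow> nat \<Rightarrow> complex \<Rightarrow> complex" where
  "brev p \<alpha> \<beta> n x = (\<Sum>k\<le>n. coeff (bpoly p \<alpha> \<beta> n) k * x ^ (n - k))"

definition Phi :: "real \<Rightarrow> real \<Rightarrow> real \<Rightarrow> complex \<Rightarrow> complex" where
  "Phi p \<alpha> \<beta> y =
     qpoch_inf (of_real (p powr (\<beta> + 1))) (of_real p) / qpoch_inf (of_real (p powr (\<alpha> + \<beta> + 2))) (of_real p)
     * (\<Sum>k. qpoch (of_real (p powr (\<alpha> + 1))) (of_real p) k
              * qpoch (of_real (p powr (1/2)) * y) (of_real p) k
              / qpoch (of_real p) (of_real p) k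
              * of_real (p powr ((\<beta> + 1) * real k))
              * qpoch_inf (- of_real (p powr (\<alpha> + 3/2 + real k)) * y) (of_real p))"

end

theory Submission
  imports Defs
begin

lemma qpoch_0[simp]: "qpoch a p 0 = 1" by (simp add: qpoch_def)

lemma qpoch_Suc: "qpoch a p (Suc k) = qpoch a p k * (1 - a * p ^ k)"
  by (simp add: qpoch_def)

lemma qpoch_Suc_shift: "qpoch a p (Suc k) = (1 - a) * qpoch (a * p) p k"
proof -
  have "qpoch a p (Suc k) = (\<Prod>j<Suc k. 1 - a * p ^ j)" by (simp add: qpoch_def)
  also have "\<dots> = (1 - a * p ^ 0) * (\<Prod>j<k. 1 - a * p ^ Suc j)"
    by (rule prod.lessThan_Suc_shift)
  finally show ?thesis by (simp add: qpoch_def mult.assoc)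
qed

lemma qprod_conv:
  fixes a p :: complex
  assumes "norm p < 1"
  shows "convergent_prod (\<lambda>j. 1 - a * p ^ j)"
proof -
  have "summable (\<lambda>j. norm a * norm p ^ j)"
    using assms by (intro summable_mult summable_geometric) auto
  then have "summable (\<lambda>j. norm ((1 - a * p ^ j) - 1))"
    by (simp add: norm_mult norm_power)
  then show ?thesis
    by (intro abs_convergent_prod_imp_convergent_prod summable_imp_abs_convergent_prod)
qed

lemma qpoch_inf_shift:
  fixes a p :: complex
  assumes "norm p < 1"
  shows "qpoch_inf a p = (1 - a) * qpoch_inf (a * p) p"
proof -
  have c: "convergent_prod (\<lambda>j. 1 - (a * p) * p ^ j)" by (rule qprod_conv[OF assms])
  have "(\<lambda>j. 1 - (a * p) * p ^ j) = (\<lambda>j. (\<lambda>i. 1 - a * p ^ i) (Suc j))"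
    by (auto simp: mult.assoc power_commutes)
  with c have "(\<lambda>j. (\<lambda>i. 1 - a * p ^ i) (Suc j)) has_prod qpoch_inf (a * p) p"
    unfolding qpoch_inf_def by (metis convergent_prod_has_prod)
  from has_prod_Suc_imp[OF this] have "(\<lambda>i. 1 - a * p ^ i) has_prod (qpoch_inf (a * p) p * (1 - a))"
    by simp
  then show ?thesis unfolding qpoch_inf_def by (simp add: has_prod_iff mult.commute)
qed

lemma qpoch_tendsto:
  fixes a p :: complex
  assumes "norm p < 1"
  shows "(\<lambda>n. qpoch a p n) \<longlonglongrightarrow> qpoch_inf a p"
proof -
  have "(\<lambda>n. \<Prod>i\<le>n. 1 - a * p ^ i) \<longlonglongrightarrow> qpoch_inf a p"
    unfolding qpoch_inf_def by (rule convergent_prod_LIMSEQ[OF qprod_conv[OF assms]])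
  then have "(\<lambda>n. qpoch a p (Suc n)) \<longlonglongrightarrow> qpoch_inf a p"
    by (simp add: qpoch_def lessThan_Suc_atMost)
  then show ?thesis by (rule LIMSEQ_imp_Suc)
qed

lemma qpoch_bounds:
  fixes a p :: complex
  assumes "norm p < 1"
  shows "norm (qpoch a p n - 1) \<le> exp (norm a / (1 - norm p)) - 1"
    and "norm (qpoch a p n) \<le> exp (norm a / (1 - norm p))"
proof -
  have "norm (qpoch a p n - 1) \<le> (\<Prod>j<n. 1 + norm (- a * p ^ j)) - 1"
    unfolding qpoch_def using norm_prod_minus1_le_prod_minus1[of "\<lambda>j. - a * p ^ j" "{..<n}"]
    by simp
  also have "(\<Prod>j<n. 1 + norm (- a * p ^ j)) \<le> exp (\<Sum>j<n. norm a * norm p ^ j)"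
    by (rule order_trans[OF _ prod_le_exp_sum]) (auto simp: norm_mult norm_power)
  also have "(\<Sum>j<n. norm a * norm p ^ j) \<le> norm a / (1 - norm p)"
  proof -
    have "(\<Sum>j<n. norm a * norm p ^ j) = norm a * (\<Sum>j<n. norm p ^ j)"
      by (simp add: sum_distrib_left)
    also have "(\<Sum>j<n. norm p ^ j) \<le> (\<Sum>j. norm p ^ j)"
      using assms by (intro sum_le_suminf summable_geometric) auto
    also have "(\<Sum>j. norm p ^ j) = 1 / (1 - norm p)"
      using assms by (simp add: suminf_geometric)
    finally show ?thesis using assms by (simp add: mult_left_mono divide_simps)
  qed
  finally show 1: "norm (qpoch a p n - 1) \<le> exp (norm a / (1 - norm p)) - 1" by simp
  have "norm (qpoch a p n) \<le> norm (qpoch a p n - 1) + 1"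
    using norm_triangle_ineq[of "qpoch a p n - 1" 1] by simp
  with 1 show "norm (qpoch a p n) \<le> exp (norm a / (1 - norm p))" by simp
qed

lemma qpoch_inf_bounds:
  fixes a p :: complex
  assumes "norm p < 1"
  shows "norm (qpoch_inf a p - 1) \<le> exp (norm a / (1 - norm p)) - 1"
    and "norm (qpoch_inf a p) \<le> exp (norm a / (1 - norm p))"
proof -
  have t: "(\<lambda>n. qpoch a p n) \<longlonglongrightarrow> qpoch_inf a p" by (rule qpoch_tendsto[OF assms])
  show "norm (qpoch_inf a p - 1) \<le> exp (norm a / (1 - norm p)) - 1"
    by (rule tendsto_le[OF _ tendsto_const tendsto_norm[OF tendsto_diff[OF t tendsto_const]]])
       (use qpoch_bounds[OF assms] in auto)
  show "norm (qpoch_inf a p) \<le> exp (norm a / (1 - norm p))"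
    by (rule tendsto_le[OF _ tendsto_const tendsto_norm[OF t]])
       (use qpoch_bounds[OF assms] in auto)
qed

fun rr :: "(nat \<Rightarrow> complex) \<Rightarrow> (nat \<Rightarrow> complex) \<Rightarrow> complex \<Rightarrow> nat \<Rightarrow> complex \<times> complex" where
  "rr c d x 0 = (0, 1)"
| "rr c d x (Suc k) = (snd (rr c d x k),
      (1 + c k * x) * snd (rr c d x k) + d k * x^2 * fst (rr c d x k))"

definition rvf :: "nat \<Rightarrow> complex poly \<Rightarrow> complex \<Rightarrow> complex" where
  "rvf n P x = (\<Sum>k\<le>n. coeff P k * x^(n-k))"

lemma rvf_Suc_deg:
  assumes "degree P \<le> n"
  shows "rvf (Suc n) P x = x * rvf n P x"
proof -
  have "rvf (Suc n) P x = (\<Sum>k\<le>n. coeff P k * x^(Suc n - k)) + coeff P (Suc n) * x ^ 0"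
    unfolding rvf_def by (simp add: sum.atMost_Suc)
  also have "coeff P (Suc n) = 0" using assms by (simp add: coeff_eq_0)
  also have "(\<Sum>k\<le>n. coeff P k * x^(Suc n - k)) = (\<Sum>k\<le>n. x * (coeff P k * x^(n - k)))"
    by (intro sum.cong refl) (simp add: Suc_diff_le)
  finally show ?thesis by (simp add: rvf_def sum_distrib_left)
qed

lemma rvf_pCons0: "rvf (Suc n) (pCons 0 P) x = rvf n P x"
  unfolding rvf_def by (subst sum.atMost_Suc_shift) simp

lemma rvf_add: "rvf n (P + Q) x = rvf n P x + rvf n Q x"
  unfolding rvf_def by (simp add: distrib_right sum.distrib)

lemma rvf_smult: "rvf n (smult c P) x = c * rvf n P x"
  unfolding rvf_def by (simp add: sum_distrib_left mult.assoc)

lemma bpair_inv: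
  "degree (fst (bpair p a b n)) \<le> n \<and> degree (snd (bpair p a b n)) \<le> n \<and>
   rvf n (snd (bpair p a b n)) x = snd (rr (\<lambda>k. of_real (bcoef_c p a b k)) (\<lambda>k. of_real (bcoef_d p a b k)) x n) \<and>
   rvf n (fst (bpair p a b n)) x = x * fst (rr (\<lambda>k. of_real (bcoef_c p a b k)) (\<lambda>k. of_real (bcoef_d p a b k)) x n)"
proof (induction n)
  case 0
  then show ?case by (simp add: rvf_def)
next
  case (Suc n)
  define C where "C = (\<lambda>k. complex_of_real (bcoef_c p a b k))"
  define D where "D = (\<lambda>k. complex_of_real (bcoef_d p a b k))"
  obtain bm bk where bp: "bpair p a b n = (bm, bk)" by fastforce
  have IH: "degree bm \<le> n" "degree bk \<le> n" "rvf n bk x = snd (rr C D x n)"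
     "rvf n bm x = x * fst (rr C D x n)"
    using Suc.IH bp by (auto simp: C_def D_def)
  have bpS: "bpair p a b (Suc n) = (bk, [:C n, 1:] * bk + smult (D n) bm)"
    using bp by (simp add: C_def D_def)
  have deg: "degree ([:C n, 1:] * bk + smult (D n) bm) \<le> Suc n"
  proof -
    have "degree ([:C n, 1:] * bk) \<le> degree [:C n, 1:] + degree bk" by (rule degree_mult_le)
    also have "\<dots> \<le> Suc n" using IH by simp
    finally have 1: "degree ([:C n, 1:] * bk) \<le> Suc n" .
    have 2: "degree (smult (D n) bm) \<le> Suc n" using IH degree_smult_le[of "D n" bm] by linarith
    show ?thesis using degree_add_le[OF 1 2] .
  qed
  have e1: "[:C n, 1:] * bk = smult (C n) bk + pCons 0 bk"
    by (simp add: mult_poly_add_left pCons_one)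
  have "rvf (Suc n) ([:C n, 1:] * bk + smult (D n) bm) x
      = C n * (x * rvf n bk x) + rvf n bk x + D n * (x * rvf n bm x)"
    using IH by (simp add: e1 rvf_add rvf_smult rvf_pCons0 rvf_Suc_deg)
  also have "\<dots> = snd (rr C D x (Suc n))"
    using IH by (simp add: algebra_simps power2_eq_square)
  finally have r1: "rvf (Suc n) ([:C n, 1:] * bk + smult (D n) bm) x = snd (rr C D x (Suc n))" .
  have r2: "rvf (Suc n) bk x = x * fst (rr C D x (Suc n))"
    using IH by (simp add: rvf_Suc_deg)
  show ?case using bpS deg r1 r2 IH by (simp add: C_def[symmetric] D_def[symmetric])
qed

lemma brev_rr:
  "brev p a b n x = snd (rr (\<lambda>k. of_real (bcoef_c p a b k)) (\<lambda>k. of_real (bcoef_d p a b k)) x n)"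
  using bpair_inv[of p a b n x] by (simp add: brev_def bpoly_def rvf_def)

definition "ctil A B p = (A - B) * (1 + A*B*p) / ((1 - A*B) * (1 - A*B*p^2))"
definition "dtil A B p = (1 - A^2*p^2) * (1 - B^2*p^2) * A*B*p^2 / ((1 - A*B*p) * (1 - A*B*p^2)^2 * (1 - A*B*p^3))"
definition "kap1 A B p = (1 - A*B) * (1 - A*B*p) / (1 - B)"
definition "kap2 A B p = (1 - A*B) * (1 - A*B*p) * (1 - A*B*p^2) * (1 - A*B*p^3) / ((1 - B) * (1 - B*p))"
definition "Qn A B p z P = p*(1-A*B*p^2)*(-(1-A)+A*(1-A*B)*P)+z*P*((1+A*B*p)*(1-A+A*p-A*B*p)-A*(1+A*p)*(1-A*B)*P)"
definition "Qc A B p z P = Qn A B p z P / (p * (1 - A*B*p^2) * (1 - A) * (1 - B))"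

lemma polyid:
  fixes A B p z M :: complex
  shows "B*(1-z*M)*(1+A*p*z*M)*p*(1-A*B*p^2)*(1-A)*(1-B) - ((1-A*B)*(1-A*B*p^2)+(A-B)*(1+A*B*p)*z)*(1-A*B*p)*(1-A*p*M)*(1-z*M)*B*p^2*M - z^2*(1+A*p)*(1+B*p)*A*B*p^2*(1-A*B)*(1-A*p*M)*M^2*(1-p*M)
   = (1-A*p*M)*(1-z*M)*B^2*Qn A B p z (p^2*M) - B*Qn A B p z (p*M)*(1+A*z*p*M)*(1-p*M)"
  unfolding Qn_def by (simp add: algebra_simps power2_eq_square power3_eq_cube)

lemma kap1':
  fixes A B p z :: complex
  assumes "1 - B \<noteq> 0" "1 - A*B \<noteq> 0" "1 - A*B*p^2 \<noteq> 0"
  shows "(1 + ctil A B p * z) * kap1 A B p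
       = ((1-A*B)*(1-A*B*p^2)+(A-B)*(1+A*B*p)*z)*(1-A*B*p) / ((1-A*B*p^2)*(1-B))"
  using assms unfolding ctil_def kap1_def by (simp add: divide_simps)

lemma kap2':
  fixes A B p z :: complex
  assumes "1 - B \<noteq> 0" "1 - B*p \<noteq> 0" "1 - A*B*p \<noteq> 0" "1 - A*B*p^2 \<noteq> 0" "1 - A*B*p^3 \<noteq> 0" "p \<noteq> 0"
  shows "dtil A B p * (z^2/p) * kap2 A B p
       = z^2 * (1 - A*p) * ((1+A*p)*(1+B*p)*A*B*p*(1-A*B)) / ((1-A*B*p^2)*(1-B))"
proof -
  have e1: "1 - A^2*p^2 = (1 - A*p)*(1 + A*p)" by (simp add: algebra_simps power2_eq_square)
  have e2: "1 - B^2*p^2 = (1 - B*p)*(1 + B*p)" by (simp add: algebra_simps power2_eq_square)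
  show ?thesis using assms unfolding dtil_def kap2_def e1 e2
    by (simp add: divide_simps) (simp add: algebra_simps power2_eq_square power3_eq_cube)
qed

lemma atoms:
  fixes a b c d e N1 N2 Qa Qb E uu ww tt p z :: complex
  assumes "p \<noteq> 0" "E \<noteq> 0" "uu \<noteq> 0" "ww \<noteq> 0" "tt \<noteq> 0"
    and "a*p*E*uu*ww - N1*p*b - z^2*N2*p*c = d*Qa - e*Qb"
  shows "a - N1/(E*ww) * (b/uu) - z^2*tt*N2/(E*ww) * (c/(uu*tt))
       = d*(Qa/(p*E*uu*ww)) - e*(Qb/(p*E*uu*ww))"
proof -
  have "(a - N1/(E*ww) * (b/uu) - z^2*tt*N2/(E*ww) * (c/(uu*tt))) * (p*E*uu*ww)
     = a*p*E*uu*ww - N1*p*b - z^2*N2*p*c"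
    using assms(1-5) by (simp add: field_simps)
  also have "\<dots> = d*Qa - e*Qb" by (rule assms(6))
  also have "\<dots> = (d*(Qa/(p*E*uu*ww)) - e*(Qb/(p*E*uu*ww))) * (p*E*uu*ww)"
    using assms(1-5) by (simp add: field_simps)
  finally show ?thesis using assms(1-5) by simp
qed

lemma bracket:
  fixes A B p z M :: complex
  assumes nz: "1 - A \<noteq> 0" "1 - A*p \<noteq> 0" "1 - B \<noteq> 0" "1 - B*p \<noteq> 0"
    "1 - A*B \<noteq> 0" "1 - A*B*p \<noteq> 0" "1 - A*B*p^2 \<noteq> 0" "1 - A*B*p^3 \<noteq> 0" "p \<noteq> 0"
  shows "B*(1-z*M)*(1+A*z*p*M)
     - ((1 + ctil A B p * z) * kap1 A B p) * ((1-A*p*M)*(1-z*M)*B*p*M/(1-A))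
     - (dtil A B p * (z^2/p) * kap2 A B p) * ((1-A*p*M)*M^2*(1-p*M)/((1-A)*(1-A*p)))
   = ((1-A*p*M)*(1-z*M)*B^2) * Qc A B p z (p^2*M) - (B*(1+A*z*p*M)*(1-p*M)) * Qc A B p z (p*M)"
proof -
  have main: "B*(1-z*M)*(1+A*z*p*M)
     - ((1-A*B)*(1-A*B*p^2)+(A-B)*(1+A*B*p)*z)*(1-A*B*p) / ((1-A*B*p^2)*(1-B)) * ((1-A*p*M)*(1-z*M)*B*p*M/(1-A))
     - z^2 * (1 - A*p) * ((1+A*p)*(1+B*p)*A*B*p*(1-A*B)) / ((1-A*B*p^2)*(1-B)) * ((1-A*p*M)*M^2*(1-p*M)/((1-A)*(1-A*p)))
     = ((1-A*p*M)*(1-z*M)*B^2) * (Qn A B p z (p^2*M) / (p*(1-A*B*p^2)*(1-A)*(1-B)))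
       - (B*(1+A*z*p*M)*(1-p*M)) * (Qn A B p z (p*M) / (p*(1-A*B*p^2)*(1-A)*(1-B)))"
  proof -
    have prem: "(B*(1-z*M)*(1+A*z*p*M))*p*(1-A*B*p^2)*(1-A)*(1-B)
      - (((1-A*B)*(1-A*B*p^2)+(A-B)*(1+A*B*p)*z)*(1-A*B*p))*p*((1-A*p*M)*(1-z*M)*B*p*M)
      - z^2*((1+A*p)*(1+B*p)*A*B*p*(1-A*B))*p*((1-A*p*M)*M^2*(1-p*M))
      = ((1-A*p*M)*(1-z*M)*B^2) * Qn A B p z (p^2*M) - (B*(1+A*z*p*M)*(1-p*M)) * Qn A B p z (p*M)"
      unfolding Qn_def by (simp add: algebra_simps power2_eq_square power3_eq_cube)
    show ?thesis by (rule atoms[OF _ _ _ _ _ prem]) (use nz in simp_all)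
  qed
  have k1: "(1 + ctil A B p * z) * kap1 A B p
       = ((1-A*B)*(1-A*B*p^2)+(A-B)*(1+A*B*p)*z)*(1-A*B*p) / ((1-A*B*p^2)*(1-B))"
    by (rule kap1') (use nz in auto)
  have k2: "dtil A B p * (z^2/p) * kap2 A B p
       = z^2 * (1 - A*p) * ((1+A*p)*(1+B*p)*A*B*p*(1-A*B)) / ((1-A*B*p^2)*(1-B))"
    by (rule kap2') (use nz in auto)
  show ?thesis unfolding k1 k2 Qc_def by (rule main)
qed

lemma bracket0:
  fixes A B p z :: complex
  assumes nz: "1 - A \<noteq> 0" "1 - B \<noteq> 0"
    "1 - A*B \<noteq> 0" "1 - A*B*p^2 \<noteq> 0" "p \<noteq> 0"
  shows "(1 + A*z) - (1 + ctil A B p * z) * kap1 A B p = (1 - A) * B * Qc A B p z p"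
  using nz unfolding ctil_def kap1_def Qc_def Qn_def
  by (simp add: divide_simps) (simp add: algebra_simps power2_eq_square)

lemma one_minus_ge_exp:
  fixes u r :: real
  assumes "0 \<le> u" "u \<le> r" "r < 1"
  shows "exp (- u / (1 - r)) \<le> 1 - u"
proof -
  have u1: "u < 1" using assms by simp
  have "1 / (1 - u) = 1 + u / (1 - u)" using u1 by (simp add: field_simps)
  also have "\<dots> \<le> exp (u / (1 - u))" by (rule exp_ge_add_one_self)
  finally have "1 / (1 - u) \<le> exp (u / (1 - u))" .
  then have c1: "exp (- (u / (1 - u))) \<le> 1 - u"
    using u1 by (simp add: exp_minus field_simps)
  have c2: "u / (1 - u) \<le> u / (1 - r)"
    using assms u1 by (intro divide_left_mono) auto
  then have c3: "exp (- (u / (1 - r))) \<le> exp (- (u / (1 - u)))" by simp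
  have "exp (- (u / (1 - r))) \<le> 1 - u" using c1 c3 by linarith
  then show ?thesis by simp
qed

lemma qpoch_pp_lower:
  fixes p :: complex
  assumes "norm p < 1"
  shows "exp (- norm p / (1 - norm p)^2) \<le> norm (qpoch p p k)"
proof -
  define r where "r = norm p"
  have r1: "r < 1" "0 \<le> r" using assms by (auto simp: r_def)
  have "exp (- r / (1 - r)^2) \<le> exp (- (\<Sum>j<k. r^(Suc j)) / (1 - r))"
  proof -
    have "(\<Sum>j<k. r^(Suc j)) = r * (\<Sum>j<k. r^j)" by (simp add: sum_distrib_left)
    also have "(\<Sum>j<k. r^j) \<le> (\<Sum>j. r^j)"
      using r1 by (intro sum_le_suminf summable_geometric) auto
    also have "(\<Sum>j. r^j) = 1 / (1 - r)" using r1 by (simp add: suminf_geometric)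
    finally have "(\<Sum>j<k. r^(Suc j)) \<le> r / (1 - r)"
      using r1 by (simp add: mult_left_mono)
    then have "(\<Sum>j<k. r^(Suc j)) / (1 - r) \<le> r / (1 - r) / (1 - r)"
      using r1 by (intro divide_right_mono) auto
    then show ?thesis by (simp add: power2_eq_square)
  qed
  also have "\<dots> = (\<Prod>j<k. exp (- (r ^ Suc j) / (1 - r)))"
    by (simp add: exp_sum[symmetric] sum_negf sum_divide_distrib)
  also have "\<dots> \<le> (\<Prod>j<k. 1 - (r ^ Suc j))"
  proof (rule prod_mono)
    fix j assume "j \<in> {..<k}"
    have "r^(Suc j) \<le> r" using r1 by (simp add: power_le_one mult_left_le)
    then have "exp (- (r ^ Suc j) / (1 - r)) \<le> 1 - (r ^ Suc j)"
      using r1 by (intro one_minus_ge_exp) auto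
    then show "0 \<le> exp (- (r ^ Suc j) / (1 - r)) \<and> exp (- (r ^ Suc j) / (1 - r)) \<le> 1 - (r ^ Suc j)"
      by simp
  qed
  also have "\<dots> \<le> (\<Prod>j<k. norm (1 - p * p^j))"
  proof (rule prod_mono)
    fix j assume "j \<in> {..<k}"
    have "r^(Suc j) \<le> 1" using r1 by (intro power_le_one) auto
    moreover have "1 - (r ^ Suc j) \<le> norm (1 - p * p^j)"
      using norm_triangle_ineq3[of 1 "p * p^j"] by (simp add: norm_mult norm_power r_def)
    ultimately show "0 \<le> 1 - (r ^ Suc j) \<and> 1 - (r ^ Suc j) \<le> norm (1 - p * p^j)" by simp
  qed
  also have "\<dots> = norm (qpoch p p k)" by (simp add: qpoch_def prod_norm r_def)
  finally show ?thesis by (simp add: r_def)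
qed

definition "wq A z p k = qpoch_inf (-(A*z*p^k)) p"
definition "trm A B z p k = qpoch A p k * qpoch z p k / qpoch p p k * B^k * wq A z p k"

lemma wq_shift:
  fixes A z p :: complex
  assumes "norm p < 1"
  shows "wq A z p k = (1 + A*z*p^k) * wq A z p (Suc k)"
  unfolding wq_def using qpoch_inf_shift[OF assms, of "-(A*z*p^k)"]
  by (simp add: algebra_simps)

lemma wq_Ap: "wq (A*p) z p k = wq A z p (Suc k)"
  unfolding wq_def by (simp add: mult.assoc mult.left_commute)

lemma wq_Ap2: "wq (A*p^2) z p k = wq A z p (Suc (Suc k))"
  unfolding wq_def by (simp add: mult.assoc mult.left_commute power2_eq_square)

definition "Kb z p = exp (1 / (1 - norm p)) * exp (norm z / (1 - norm p))
   * exp (norm p / (1 - norm p)^2) * exp (norm z / (1 - norm p))"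

lemma trm_bound:
  fixes A B z p :: complex
  assumes p: "norm p < 1" and A: "norm A \<le> 1"
  shows "norm (trm A B z p k) \<le> Kb z p * norm B ^ k"
proof -
  have p0: "0 \<le> 1 - norm p" "0 < 1 - norm p" using p by auto
  have b1: "norm (qpoch A p k) \<le> exp (1 / (1 - norm p))"
  proof -
    have "norm A / (1 - norm p) \<le> 1 / (1 - norm p)" using A p0 by (intro divide_right_mono) auto
    then have "exp (norm A / (1 - norm p)) \<le> exp (1 / (1 - norm p))" by simp
    then show ?thesis using qpoch_bounds(2)[OF p, of A k] by linarith
  qed
  have b2: "norm (qpoch z p k) \<le> exp (norm z / (1 - norm p))"
    using qpoch_bounds(2)[OF p] .
  have lo: "exp (- norm p / (1 - norm p)^2) \<le> norm (qpoch p p k)" by (rule qpoch_pp_lower[OF p])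
  have b3: "1 / norm (qpoch p p k) \<le> exp (norm p / (1 - norm p)^2)"
  proof -
    have pos: "0 < norm (qpoch p p k)" using lo exp_gt_zero[of "- norm p / (1 - norm p)^2"] by linarith
    have "1 / norm (qpoch p p k) \<le> 1 / exp (- norm p / (1 - norm p)^2)"
      using lo pos by (intro divide_left_mono) auto
    also have "\<dots> = exp (norm p / (1 - norm p)^2)" by (simp add: exp_minus field_simps)
    finally show ?thesis .
  qed
  have b4: "norm (wq A z p k) \<le> exp (norm z / (1 - norm p))"
  proof -
    have "norm (wq A z p k) \<le> exp (norm (-(A*z*p^k)) / (1 - norm p))"
      unfolding wq_def by (rule qpoch_inf_bounds(2)[OF p])
    also have "norm (-(A*z*p^k)) \<le> norm z"
    proof -
      have "norm (-(A*z*p^k)) = norm A * norm z * norm p ^ k" by (simp add: norm_mult norm_power)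
      also have "\<dots> \<le> 1 * norm z * 1"
        using A p by (intro mult_mono power_le_one) auto
      finally show ?thesis by simp
    qed
    then have "exp (norm (-(A*z*p^k)) / (1 - norm p)) \<le> exp (norm z / (1 - norm p))"
      using p0 by (simp add: divide_right_mono)
    finally show ?thesis .
  qed
  have "norm (trm A B z p k) = norm (qpoch A p k) * norm (qpoch z p k) * (1 / norm (qpoch p p k))
      * norm (wq A z p k) * norm B ^ k"
    by (simp add: trm_def norm_mult norm_divide norm_power)
  also have "\<dots> \<le> exp (1 / (1 - norm p)) * exp (norm z / (1 - norm p)) * exp (norm p / (1 - norm p)^2)
      * exp (norm z / (1 - norm p)) * norm B ^ k"
    by (intro mult_mono b1 b2 b3 b4 order_refl) auto
  finally show ?thesis by (simp add: Kb_def)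
qed

lemma trm_summable:
  fixes A B z p :: complex
  assumes p: "norm p < 1" and A: "norm A \<le> 1" and B: "norm B < 1"
  shows "summable (trm A B z p)"
proof (rule summable_comparison_test')
  show "summable (\<lambda>k. Kb z p * norm B ^ k)"
    using B by (intro summable_mult summable_geometric) auto
  show "norm (trm A B z p k) \<le> Kb z p * norm B ^ k" for k by (rule trm_bound[OF p A])
qed

definition "Ser A B z p = suminf (trm A B z p)"

lemma bnd4:
  fixes A z p :: complex
  assumes p: "norm p < 1" and A: "norm A \<le> 1"
  shows "norm (qpoch A p i * qpoch z p j / qpoch p p k * wq A z p l) \<le> Kb z p"
proof -
  have p0: "0 \<le> 1 - norm p" "0 < 1 - norm p" using p by auto
  have b1: "norm (qpoch A p i) \<le> exp (1 / (1 - norm p))"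
  proof -
    have "norm A / (1 - norm p) \<le> 1 / (1 - norm p)" using A p0 by (intro divide_right_mono) auto
    then have "exp (norm A / (1 - norm p)) \<le> exp (1 / (1 - norm p))" by simp
    then show ?thesis using qpoch_bounds(2)[OF p, of A i] by linarith
  qed
  have b2: "norm (qpoch z p j) \<le> exp (norm z / (1 - norm p))"
    using qpoch_bounds(2)[OF p] .
  have lo: "exp (- norm p / (1 - norm p)^2) \<le> norm (qpoch p p k)" by (rule qpoch_pp_lower[OF p])
  have b3: "1 / norm (qpoch p p k) \<le> exp (norm p / (1 - norm p)^2)"
  proof -
    have pos: "0 < norm (qpoch p p k)" using lo exp_gt_zero[of "- norm p / (1 - norm p)^2"] by linarith
    have "1 / norm (qpoch p p k) \<le> 1 / exp (- norm p / (1 - norm p)^2)"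
      using lo pos by (intro divide_left_mono) auto
    also have "\<dots> = exp (norm p / (1 - norm p)^2)" by (simp add: exp_minus field_simps)
    finally show ?thesis .
  qed
  have b4: "norm (wq A z p l) \<le> exp (norm z / (1 - norm p))"
  proof -
    have "norm (wq A z p l) \<le> exp (norm (-(A*z*p^l)) / (1 - norm p))"
      unfolding wq_def by (rule qpoch_inf_bounds(2)[OF p])
    also have "norm (-(A*z*p^l)) \<le> norm z"
    proof -
      have "norm (-(A*z*p^l)) = norm A * norm z * norm p ^ l" by (simp add: norm_mult norm_power)
      also have "\<dots> \<le> 1 * norm z * 1"
        using A p by (intro mult_mono power_le_one) auto
      finally show ?thesis by simp
    qed
    then have "exp (norm (-(A*z*p^l)) / (1 - norm p)) \<le> exp (norm z / (1 - norm p))"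
      using p0 by (simp add: divide_right_mono)
    finally show ?thesis .
  qed
  have "norm (qpoch A p i * qpoch z p j / qpoch p p k * wq A z p l)
      = norm (qpoch A p i) * norm (qpoch z p j) * (1 / norm (qpoch p p k)) * norm (wq A z p l)"
    by (simp add: norm_mult norm_divide)
  also have "\<dots> \<le> exp (1 / (1 - norm p)) * exp (norm z / (1 - norm p)) * exp (norm p / (1 - norm p)^2)
      * exp (norm z / (1 - norm p))"
    by (intro mult_mono b1 b2 b3 b4 order_refl) auto
  finally show ?thesis by (simp add: Kb_def)
qed

lemma nlt1:
  fixes x y :: complex
  assumes "norm x < 1" "norm y \<le> 1"
  shows "norm (x*y) < 1"
proof -
  have "norm (x*y) = norm x * norm y" by (simp add: norm_mult)
  also have "\<dots> \<le> norm x * 1" using assms by (intro mult_left_mono) auto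
  finally show ?thesis using assms by simp
qed

lemma npow1:
  fixes p :: complex
  assumes "norm p \<le> 1"
  shows "norm (p^k) \<le> 1"
  using assms by (simp add: norm_power power_le_one)

lemma e2_gen:
  fixes X c1 c2 a1 a2 Y Z Bm M W pm :: complex
  assumes "a1 \<noteq> 0" "a2 \<noteq> 0" "Z \<noteq> 0" "pm \<noteq> 0"
  shows "X*c1*c2/a1/a2 * Y / Z * (Bm*M^2) * W = X*c1*Y*Bm*W/(Z*pm) * (c2*M^2*pm/(a1*a2))"
  using assms by (simp add: field_simps)

lemma e3_gen:
  fixes X c1 c2 c3 Y Z Bm B2 Qa M W pm :: complex
  shows "X*c1*c2*(Y*c3)*(Bm*B2)*Qa/(Z*pm)*W = X*c1*Y*Bm*W/(Z*pm)*((c2*c3*B2)*Qa)"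
  by (simp add: divide_inverse mult_ac)

lemma e4_gen:
  fixes X c1 c4 Y Z Bm B Qb W pm :: complex
  assumes "pm \<noteq> 0"
  shows "X*c1*Y*(Bm*B)*Qb/Z*(c4*W) = X*c1*Y*Bm*W/(Z*pm)*((B*c4*pm)*Qb)"
  using assms by (simp add: divide_inverse mult_ac)

lemma qpoch_pp_nz:
  fixes p :: complex
  assumes "norm p < 1"
  shows "qpoch p p k \<noteq> 0"
  using qpoch_pp_lower[OF assms, of k] exp_gt_zero[of "- norm p / (1 - norm p)^2"] by auto

lemma contig:
  fixes A B z p :: complex
  assumes p: "norm p < 1" "p \<noteq> 0" and A: "norm A \<le> 1" and B: "norm B < 1"
    and nz: "1 - A \<noteq> 0" "1 - A*p \<noteq> 0" "1 - B \<noteq> 0" "1 - B*p \<noteq> 0"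
    "1 - A*B \<noteq> 0" "1 - A*B*p \<noteq> 0" "1 - A*B*p^2 \<noteq> 0" "1 - A*B*p^3 \<noteq> 0"
  shows "Ser A B z p = ((1 + ctil A B p * z) * kap1 A B p) * Ser (A*p) (B*p) z p
            + (dtil A B p * (z^2/p) * kap2 A B p) * Ser (A*p^2) (B*p^2) z p"
proof -
  define k1 where "k1 = (1 + ctil A B p * z) * kap1 A B p"
  define k2 where "k2 = dtil A B p * (z^2/p) * kap2 A B p"
  define T0 where "T0 = trm A B z p"
  define T1 where "T1 = trm (A*p) (B*p) z p"
  define T2 where "T2 = trm (A*p^2) (B*p^2) z p"
  define u where "u = (\<lambda>k. case k of 0 \<Rightarrow> 0 | Suc m \<Rightarrow> T2 m)"
  define G where "G = (\<lambda>k. case k of 0 \<Rightarrow> 0 | Suc m \<Rightarrow>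
      qpoch A p (Suc m) * qpoch z p m * B^(Suc m) * Qc A B p z (p^(Suc m)) / qpoch p p m * wq A z p (Suc m))"
  have np: "norm p \<le> 1" using p by simp
  have Ap: "norm (A*p) \<le> 1" using A np by (simp add: norm_mult mult_le_one)
  have Ap2: "norm (A*p^2) \<le> 1" using A np by (simp add: norm_mult norm_power mult_le_one power_le_one)
  have Bp: "norm (B*p) < 1" using B np by (rule nlt1)
  have Bp2: "norm (B*p^2) < 1" using B npow1[OF np] by (rule nlt1)
  have s0: "T0 sums Ser A B z p" unfolding T0_def Ser_def
    by (rule summable_sums[OF trm_summable[OF p(1) A B]])
  have s1: "T1 sums Ser (A*p) (B*p) z p" unfolding T1_def Ser_def
    by (rule summable_sums[OF trm_summable[OF p(1) Ap Bp]])
  have s2: "T2 sums Ser (A*p^2) (B*p^2) z p" unfolding T2_def Ser_def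
    by (rule summable_sums[OF trm_summable[OF p(1) Ap2 Bp2]])
  have su: "u sums Ser (A*p^2) (B*p^2) z p"
  proof -
    have "(\<lambda>n. u (Suc n)) sums Ser (A*p^2) (B*p^2) z p" using s2 by (simp add: u_def)
    then show ?thesis by (subst (asm) sums_Suc_iff) (simp add: u_def)
  qed
  have key: "T0 k - k1 * T1 k - k2 * u k = G (Suc k) - G k" for k
  proof (cases k)
    case 0
    have w: "wq A z p 0 = (1 + A*z) * wq A z p (Suc 0)" using wq_shift[OF p(1), of A z 0] by simp
    have b0: "(1 + A*z) - k1 = (1 - A) * B * Qc A B p z p"
      unfolding k1_def by (rule bracket0) (use nz p in auto)
    have "T0 0 - k1 * T1 0 - k2 * u 0 = ((1 + A*z) - k1) * wq A z p (Suc 0)"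
      by (simp add: T0_def T1_def u_def trm_def w wq_Ap algebra_simps)
    also have "\<dots> = G (Suc 0) - G 0"
      by (simp add: b0 G_def qpoch_Suc)
    finally show ?thesis using 0 by simp
  next
    case (Suc m)
    define X where "X = qpoch A p m"
    define Y where "Y = qpoch z p m"
    define Z where "Z = qpoch p p m"
    define M where "M = p^m"
    define W where "W = wq A z p (Suc (Suc m))"
    have Z0: "Z \<noteq> 0" unfolding Z_def by (rule qpoch_pp_nz[OF p(1)])
    have pM: "1 - p*M \<noteq> 0"
    proof
      assume "1 - p*M = 0"
      then have "norm (p*M) = 1" by (metis eq_iff_diff_eq_0 norm_one)
      moreover have "norm (p*M) < 1" unfolding M_def using p(1) npow1[OF np] by (rule nlt1)
      ultimately show False by simp
    qed
    have qA1: "qpoch A p (Suc m) = X*(1-A*M)" by (simp add: qpoch_Suc X_def M_def)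
    have qA2: "qpoch A p (Suc (Suc m)) = X*(1-A*M)*(1-A*p*M)"
      by (simp add: qpoch_Suc X_def M_def mult.assoc mult.left_commute)
    have qAp: "qpoch (A*p) p (Suc m) = X*(1-A*M)*(1-A*p*M)/(1-A)"
    proof -
      have "qpoch (A*p) p (Suc m) * (1-A) = X*(1-A*M)*(1-A*p*M)"
        using qA2 qpoch_Suc_shift[of A p "Suc m"] by (simp add: mult.commute)
      then show ?thesis by (subst nonzero_eq_divide_eq[OF nz(1)])
    qed
    have qAp2: "qpoch (A*p^2) p m = X*(1-A*M)*(1-A*p*M)/(1-A)/(1-A*p)"
    proof -
      have "qpoch (A*p*p) p m * (1-A*p) = X*(1-A*M)*(1-A*p*M)/(1-A)"
        using qAp qpoch_Suc_shift[of "A*p" p m] by (simp add: mult.commute)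
      then have "qpoch (A*p*p) p m = X*(1-A*M)*(1-A*p*M)/(1-A)/(1-A*p)"
        by (subst nonzero_eq_divide_eq[OF nz(2)])
      then show ?thesis by (simp add: power2_eq_square mult.assoc)
    qed
    have qz1: "qpoch z p (Suc m) = Y*(1-z*M)" by (simp add: qpoch_Suc Y_def M_def)
    have qp1: "qpoch p p (Suc m) = Z*(1-p*M)" by (simp add: qpoch_Suc Z_def M_def)
    have w1: "wq A z p (Suc m) = (1 + A*z*p*M) * W"
      using wq_shift[OF p(1), of A z "Suc m"] by (simp add: W_def M_def mult.assoc mult.left_commute)
    define K0 where "K0 = X*(1-A*M)*Y*B^m*W/(Z*(1-p*M))"
    define b0 where "b0 = B*(1-z*M)*(1+A*z*p*M)"
    define b1 where "b1 = (1-A*p*M)*(1-z*M)*B*p*M/(1-A)"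
    define b2 where "b2 = (1-A*p*M)*M^2*(1-p*M)/((1-A)*(1-A*p))"
    define b3 where "b3 = ((1-A*p*M)*(1-z*M)*B^2) * Qc A B p z (p^2*M)"
    define b4 where "b4 = (B*(1+A*z*p*M)*(1-p*M)) * Qc A B p z (p*M)"
    have br: "b0 - k1 * b1 - k2 * b2 = b3 - b4"
      unfolding b0_def b1_def b2_def b3_def b4_def k1_def k2_def
      by (rule bracket) (use nz p in auto)
    have e0: "T0 (Suc m) = K0 * b0"
      unfolding T0_def trm_def K0_def b0_def using Z0 pM
      by (simp add: qA1 qz1 qp1 w1 field_simps)
    have e1: "T1 (Suc m) = K0 * b1"
      unfolding T1_def trm_def K0_def b1_def using Z0 pM nz
      by (simp add: qAp qz1 qp1 wq_Ap W_def[symmetric] M_def[symmetric] field_simps power_mult_distrib)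
    have Bp2m: "(B*p^2)^m = B^m * M^2"
    proof -
      have "(p^2)^m = (p^m)^2" by (simp add: power_mult[symmetric] mult.commute)
      then show ?thesis by (simp add: M_def power_mult_distrib)
    qed
    have e2: "u (Suc m) = K0 * b2"
    proof -
      have "u (Suc m) = X*(1-A*M)*(1-A*p*M)/(1-A)/(1-A*p) * Y / Z * (B^m * M^2) * W"
        by (simp add: u_def T2_def trm_def qAp2 wq_Ap2 Bp2m W_def[symmetric] Y_def[symmetric] Z_def[symmetric])
      also have "\<dots> = K0 * b2" unfolding K0_def b2_def
        by (rule e2_gen) (use Z0 pM nz in auto)
      finally show ?thesis .
    qed
    have pS: "p^(Suc m) = p*M" by (simp add: M_def)
    have pSS: "p^(Suc (Suc m)) = p^2*M" by (simp add: M_def power2_eq_square)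
    have BS: "B^(Suc m) = B^m*B" by simp
    have BSS: "B^(Suc (Suc m)) = B^m*B^2" by (simp add: power2_eq_square)
    have e3: "G (Suc (Suc m)) = K0 * b3"
    proof -
      have "G (Suc (Suc m)) = qpoch A p (Suc (Suc m)) * qpoch z p (Suc m) * B^(Suc (Suc m))
          * Qc A B p z (p^(Suc (Suc m))) / qpoch p p (Suc m) * wq A z p (Suc (Suc m))"
        by (simp add: G_def)
      also have "\<dots> = X*(1-A*M)*(1-A*p*M) * (Y*(1-z*M)) * (B^m*B^2) * Qc A B p z (p^2*M) / (Z*(1-p*M)) * W"
        by (simp only: qA2 qz1 qp1 pSS BSS W_def[symmetric])
      also have "\<dots> = K0 * b3" unfolding K0_def b3_def by (rule e3_gen)
      finally show ?thesis .
    qed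
    have e4: "G (Suc m) = K0 * b4"
    proof -
      have "G (Suc m) = qpoch A p (Suc m) * qpoch z p m * B^(Suc m)
          * Qc A B p z (p^(Suc m)) / qpoch p p m * wq A z p (Suc m)"
        by (simp add: G_def)
      also have "\<dots> = X*(1-A*M) * Y * (B^m*B) * Qc A B p z (p*M) / Z * ((1+A*z*p*M)*W)"
        by (simp only: qA1 pS BS w1 X_def[symmetric] Y_def[symmetric] Z_def[symmetric])
      also have "\<dots> = K0 * b4" unfolding K0_def b4_def by (rule e4_gen[OF pM])
      finally show ?thesis .
    qed
    have "T0 (Suc m) - k1 * T1 (Suc m) - k2 * u (Suc m) = K0 * (b0 - k1 * b1 - k2 * b2)"
      by (simp add: e0 e1 e2 algebra_simps)
    also have "\<dots> = K0 * (b3 - b4)" by (simp add: br)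
    also have "\<dots> = G (Suc (Suc m)) - G (Suc m)" by (simp add: e3 e4 algebra_simps)
    finally show ?thesis using Suc by simp
  qed
  have G0: "G \<longlonglongrightarrow> 0"
  proof -
    define H where "H = (\<lambda>m. qpoch A p (Suc m) * qpoch z p m / qpoch p p m * wq A z p (Suc m) * B^(Suc m))"
    have GH: "G (Suc m) = H m * Qc A B p z (p^(Suc m))" for m
      by (simp add: G_def H_def)
    have H0: "H \<longlonglongrightarrow> 0"
    proof (rule Lim_null_comparison)
      show "\<forall>\<^sub>F m in sequentially. norm (H m) \<le> Kb z p * norm B ^ (Suc m)"
      proof (intro always_eventually allI)
        fix m
        have "norm (H m) = norm (qpoch A p (Suc m) * qpoch z p m / qpoch p p m * wq A z p (Suc m)) * norm (B ^ (Suc m))"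
          unfolding H_def by (rule norm_mult)
        also have "\<dots> = norm (qpoch A p (Suc m) * qpoch z p m / qpoch p p m * wq A z p (Suc m)) * norm B ^ (Suc m)"
          by (simp only: norm_power)
        also have "\<dots> \<le> Kb z p * norm B ^ (Suc m)"
          by (intro mult_right_mono bnd4[OF p(1) A]) auto
        finally show "norm (H m) \<le> Kb z p * norm B ^ (Suc m)" .
      qed
      have "(\<lambda>m. norm B ^ Suc m) \<longlonglongrightarrow> 0"
        using B by (intro LIMSEQ_Suc LIMSEQ_power_zero) auto
      then show "(\<lambda>m. Kb z p * norm B ^ (Suc m)) \<longlonglongrightarrow> 0"
        by (rule tendsto_mult_right_zero)
    qed
    have "(\<lambda>m. p^(Suc m)) \<longlonglongrightarrow> 0"
      using p(1) by (intro LIMSEQ_Suc LIMSEQ_power_zero) auto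
    moreover have "isCont (Qc A B p z) 0"
    proof -
      have "isCont (\<lambda>P. Qn A B p z P * (1 / (p * (1 - A*B*p^2) * (1 - A) * (1 - B)))) 0"
        unfolding Qn_def by (intro continuous_intros)
      moreover have "(\<lambda>P. Qn A B p z P * (1 / (p * (1 - A*B*p^2) * (1 - A) * (1 - B)))) = Qc A B p z"
        by (auto simp: Qc_def)
      ultimately show ?thesis by simp
    qed
    ultimately have Q: "(\<lambda>m. Qc A B p z (p^(Suc m))) \<longlonglongrightarrow> Qc A B p z 0"
      by (intro isCont_tendsto_compose[of _ "Qc A B p z"])
    have "(\<lambda>m. G (Suc m)) \<longlonglongrightarrow> 0 * Qc A B p z 0"
      unfolding GH by (intro tendsto_mult H0 Q)
    then show ?thesis by (simp add: filterlim_sequentially_Suc)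
  qed
  have "(\<lambda>k. G (Suc k) - G k) sums (0 - G 0)" by (rule telescope_sums[OF G0])
  then have "(\<lambda>k. T0 k - k1 * T1 k - k2 * u k) sums 0"
    by (simp add: key G_def)
  moreover have "(\<lambda>k. T0 k - k1 * T1 k - k2 * u k) sums
      (Ser A B z p - k1 * Ser (A*p) (B*p) z p - k2 * Ser (A*p^2) (B*p^2) z p)"
    by (intro sums_diff sums_mult s0 s1 su)
  ultimately have "Ser A B z p - k1 * Ser (A*p) (B*p) z p - k2 * Ser (A*p^2) (B*p^2) z p = 0"
    using sums_unique2 by blast
  then show ?thesis by (simp add: k1_def k2_def algebra_simps)
qed

lemma powr_lt1:
  fixes p e :: real
  assumes "0 < p" "p < 1" "0 < e"
  shows "p powr e < 1"
  using powr_less_mono2[of e p 1] assms by simp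

lemma Phi_eq:
  fixes p a b :: real
  assumes p: "0 < p"
  shows "Phi p a b y = qpoch_inf (of_real (p powr (b+1))) (of_real p)
      / qpoch_inf (of_real (p powr (a+1)) * of_real (p powr (b+1))) (of_real p)
      * Ser (of_real (p powr (a+1))) (of_real (p powr (b+1))) (of_real (p powr (1/2)) * y) (of_real p)"
proof -
  have e1: "complex_of_real (p powr ((b+1) * real k)) = (complex_of_real (p powr (b+1)))^k" for k
  proof -
    have "(p powr (b+1))^k = p powr (real k * (b+1))" using p by (simp add: powr_power)
    then show ?thesis by (simp add: mult.commute flip: of_real_power)
  qed
  have e2: "- complex_of_real (p powr (a + 3/2 + real k)) * y
      = - (complex_of_real (p powr (a+1)) * (complex_of_real (p powr (1/2)) * y) * complex_of_real p ^ k)" for k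
  proof -
    have "a + 3/2 + real k = (a+1) + 1/2 + real k" by simp
    then have "p powr (a + 3/2 + real k) = p powr (a+1) * p powr (1/2) * p ^ k"
      using p by (simp only: powr_add powr_realpow)
    then show ?thesis by (simp add: mult_ac)
  qed
  have e3: "complex_of_real (p powr (a+b+2)) = complex_of_real (p powr (a+1)) * complex_of_real (p powr (b+1))"
  proof -
    have "a+b+2 = (a+1)+(b+1)" by simp
    then have "p powr (a+b+2) = p powr (a+1) * p powr (b+1)" by (simp only: powr_add)
    then show ?thesis by simp
  qed
  show ?thesis
    unfolding Phi_def Ser_def trm_def wq_def e1 e2 e3 ..
qed

lemma prodinf_qnz:
  fixes a p :: complex
  assumes "norm p < 1" "norm a < 1"
  shows "qpoch_inf a p \<noteq> 0"
  unfolding qpoch_inf_def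
proof (rule prodinf_nonzero[OF qprod_conv[OF assms(1)]])
  fix i
  have "norm (a * p^i) < 1" using assms by (intro nlt1 npow1) auto
  then show "1 - a * p^i \<noteq> 0" by (metis eq_iff_diff_eq_0 norm_one order_less_irrefl)
qed

lemma ct_gen:
  fixes u v X D s :: real
  assumes "u \<noteq> 0"
  shows "(1 - v/u) * X / D * (u * s) = (u - v) * X / D * s"
proof -
  have "(1 - v/u) * X / D * (u * s) = ((1 - v/u) * u) * X / D * s" by (simp add: divide_inverse mult_ac)
  also have "(1 - v/u) * u = u - v" using assms by (simp add: field_simps)
  finally show ?thesis .
qed

lemma C_rel:
  fixes qB0 qB1 qAB0 qAB2 ca cb :: complex
  assumes "ca \<noteq> 0" "cb \<noteq> 0" "qAB0 \<noteq> 0" "cc \<noteq> 0"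
    and "qB0 = cc * qB1" "qAB0 = ca * cb * qAB2"
  shows "qB1 / qAB2 = qB0 / qAB0 * (ca * cb / cc)"
  using assms by (simp add: field_simps)

lemma Phi_contig:
  fixes p a b :: real and y :: complex
  assumes p: "0 < p" "p < 1" and ab: "a > -1" "b > -1"
  shows "Phi p a b y = (1 + of_real (bcoef_c p a b 0) * y) * Phi p (a+1) (b+1) y
           + of_real (bcoef_d p a b 1) * y^2 * Phi p (a+2) (b+2) y"
proof -
  define ar where "ar = p powr (a+1)"
  define br where "br = p powr (b+1)"
  define sr where "sr = p powr (1/2)"
  have ar: "0 < ar" "ar < 1" unfolding ar_def using p ab by (auto intro: powr_lt1)
  have br: "0 < br" "br < 1" unfolding br_def using p ab by (auto intro: powr_lt1)
  have sr2: "sr^2 = p" unfolding sr_def using p by (simp add: powr_half_sqrt)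
  define A where "A = complex_of_real ar"
  define B where "B = complex_of_real br"
  define P where "P = complex_of_real p"
  define z where "z = complex_of_real sr * y"
  have a1: "p powr ((a+1)+1) = ar * p"
  proof -
    have "(a+1)+1 = (a+1) + real 1" by simp
    then show ?thesis unfolding ar_def by (simp only: powr_add powr_realpow[OF p(1)] power_one_right)
  qed
  have b1: "p powr ((b+1)+1) = br * p"
  proof -
    have "(b+1)+1 = (b+1) + real 1" by simp
    then show ?thesis unfolding br_def by (simp only: powr_add powr_realpow[OF p(1)] power_one_right)
  qed
  have a2: "p powr ((a+2)+1) = ar * p^2"
  proof -
    have "(a+2)+1 = (a+1) + real 2" by simp
    then show ?thesis unfolding ar_def by (simp only: powr_add powr_realpow[OF p(1)] power_one_right)
  qed
  have b2: "p powr ((b+2)+1) = br * p^2"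
  proof -
    have "(b+2)+1 = (b+1) + real 2" by simp
    then show ?thesis unfolding br_def by (simp only: powr_add powr_realpow[OF p(1)] power_one_right)
  qed
  have Phi0: "Phi p a b y = qpoch_inf B P / qpoch_inf (A*B) P * Ser A B z P"
    using Phi_eq[OF p(1), of a b y] by (simp add: A_def B_def P_def z_def ar_def br_def sr_def)
  have Phi1: "Phi p (a+1) (b+1) y = qpoch_inf (B*P) P / qpoch_inf (A*P*(B*P)) P * Ser (A*P) (B*P) z P"
    using Phi_eq[OF p(1), of "a+1" "b+1" y] a1 b1 by (simp add: A_def B_def P_def z_def sr_def)
  have Phi2: "Phi p (a+2) (b+2) y = qpoch_inf (B*P^2) P / qpoch_inf (A*P^2*(B*P^2)) P * Ser (A*P^2) (B*P^2) z P"
    using Phi_eq[OF p(1), of "a+2" "b+2" y] a2 b2 by (simp add: A_def B_def P_def z_def sr_def)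
  have nP: "norm P < 1" "P \<noteq> 0" using p by (auto simp: P_def)
  have nA: "norm A \<le> 1" "norm A < 1" using ar by (auto simp: A_def)
  have nB: "norm B < 1" using br by (simp add: B_def)
  have nAB: "norm (A*B) < 1" using nA nB by (intro nlt1) auto
  have nz1: "1 - x \<noteq> 0" if "norm x < 1" for x :: complex
    using that by (metis eq_iff_diff_eq_0 norm_one order_less_irrefl)
  have nPk: "norm (P^k) \<le> 1" for k using nP by (intro npow1) auto
  have nz: "1 - A \<noteq> 0" "1 - A*P \<noteq> 0" "1 - B \<noteq> 0" "1 - B*P \<noteq> 0"
    "1 - A*B \<noteq> 0" "1 - A*B*P \<noteq> 0" "1 - A*B*P^2 \<noteq> 0" "1 - A*B*P^3 \<noteq> 0"
    using nz1 nlt1 nA nB nAB nP nPk by (metis less_imp_le power2_eq_square)+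
  have ct: "of_real (bcoef_c p a b 0) * y = ctil A B P * z"
  proof -
    have x1: "p powr (b - a) = br / ar"
    proof -
      have "b - a = (b+1) - (a+1)" by simp
      then show ?thesis unfolding ar_def br_def by (simp only: powr_diff)
    qed
    have x2: "p powr (a + b + 3 + 2 * real 0) = ar * br * p"
    proof -
      have "a + b + 3 + 2 * real 0 = (a+1) + (b+1) + real 1" by simp
      then show ?thesis unfolding ar_def br_def by (simp only: powr_add powr_realpow[OF p(1)] power_one_right)
    qed
    have x3: "p powr (a + b + 2 + 2 * real 0) = ar * br"
    proof -
      have "a + b + 2 + 2 * real 0 = (a+1) + (b+1)" by simp
      then show ?thesis unfolding ar_def br_def by (simp only: powr_add)
    qed
    have x4: "p powr (a + b + 4 + 2 * real 0) = ar * br * p^2"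
    proof -
      have "a + b + 4 + 2 * real 0 = (a+1) + (b+1) + real 2" by simp
      then show ?thesis unfolding ar_def br_def by (simp only: powr_add powr_realpow[OF p(1)] power_one_right)
    qed
    have x5: "p powr (a + 3/2 + real 0) = ar * sr"
    proof -
      have "a + 3/2 + real 0 = (a+1) + 1/2" by simp
      then show ?thesis unfolding ar_def sr_def by (simp only: powr_add)
    qed
    have "bcoef_c p a b 0 = (1 - br/ar) * (1 + ar*br*p) / ((1 - ar*br) * (1 - ar*br*p^2)) * (ar * sr)"
      unfolding bcoef_c_def x1 x2 x3 x4 x5 ..
    also have "\<dots> = (ar - br) * (1 + ar*br*p) / ((1 - ar*br) * (1 - ar*br*p^2)) * sr"
      by (rule ct_gen) (use ar in simp)
    finally have "bcoef_c p a b 0 = (ar - br) * (1 + ar*br*p) / ((1 - ar*br) * (1 - ar*br*p^2)) * sr" .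
    then show ?thesis by (simp add: ctil_def A_def B_def P_def z_def)
  qed
  have dt: "of_real (bcoef_d p a b 1) * y^2 = dtil A B P * (z^2/P)"
  proof -
    have y1: "p powr (2 * a + 2 + 2 * real 1) = ar * ar * p^2"
    proof -
      have "2 * a + 2 + 2 * real 1 = (a+1) + (a+1) + real 2" by simp
      then show ?thesis unfolding ar_def by (simp only: powr_add powr_realpow[OF p(1)] power_one_right)
    qed
    have y2: "p powr (2 * b + 2 + 2 * real 1) = br * br * p^2"
    proof -
      have "2 * b + 2 + 2 * real 1 = (b+1) + (b+1) + real 2" by simp
      then show ?thesis unfolding br_def by (simp only: powr_add powr_realpow[OF p(1)] power_one_right)
    qed
    have y3: "p powr (2 * real 1 + a + b + 2) = ar * br * p^2"
    proof -
      have "2 * real 1 + a + b + 2 = (a+1) + (b+1) + real 2" by simp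
      then show ?thesis unfolding ar_def br_def by (simp only: powr_add powr_realpow[OF p(1)] power_one_right)
    qed
    have y4: "p powr (a + b + 1 + 2 * real 1) = ar * br * p"
    proof -
      have "a + b + 1 + 2 * real 1 = (a+1) + (b+1) + real 1" by simp
      then show ?thesis unfolding ar_def br_def by (simp only: powr_add powr_realpow[OF p(1)] power_one_right)
    qed
    have y5: "p powr (a + b + 2 + 2 * real 1) = ar * br * p^2"
    proof -
      have "a + b + 2 + 2 * real 1 = (a+1) + (b+1) + real 2" by simp
      then show ?thesis unfolding ar_def br_def by (simp only: powr_add powr_realpow[OF p(1)] power_one_right)
    qed
    have y6: "p powr (a + b + 3 + 2 * real 1) = ar * br * p^3"
    proof -
      have "a + b + 3 + 2 * real 1 = (a+1) + (b+1) + real 3" by simp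
      then show ?thesis unfolding ar_def br_def by (simp only: powr_add powr_realpow[OF p(1)] power_one_right)
    qed
    have "bcoef_d p a b 1 = (1 - ar*ar*p^2) * (1 - br*br*p^2) * (ar*br*p^2)
        / ((1 - ar*br*p) * (1 - ar*br*p^2)^2 * (1 - ar*br*p^3))"
      unfolding bcoef_d_def y1 y2 y3 y4 y5 y6 ..
    moreover have "z^2/P = y^2" using nP sr2 by (simp add: z_def P_def power_mult_distrib flip: of_real_power)
    ultimately show ?thesis by (simp add: dtil_def A_def B_def P_def mult_ac power2_eq_square)
  qed
  have S: "Ser A B z P = ((1 + ctil A B P * z) * kap1 A B P) * Ser (A*P) (B*P) z P
            + (dtil A B P * (z^2/P) * kap2 A B P) * Ser (A*P^2) (B*P^2) z P"
    by (rule contig) (use nP nA nB nz in auto)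
  have qB: "qpoch_inf B P = (1 - B) * qpoch_inf (B*P) P" by (rule qpoch_inf_shift[OF nP(1)])
  have qB2: "qpoch_inf B P = ((1 - B) * (1 - B*P)) * qpoch_inf (B*P^2) P"
    using qpoch_inf_shift[OF nP(1), of B] qpoch_inf_shift[OF nP(1), of "B*P"]
    by (simp add: power2_eq_square mult.assoc)
  have qAB: "qpoch_inf (A*B) P = (1 - A*B) * (1 - A*B*P) * qpoch_inf (A*P*(B*P)) P"
    using qpoch_inf_shift[OF nP(1), of "A*B"] qpoch_inf_shift[OF nP(1), of "A*B*P"]
    by (simp add: mult_ac)
  have qAB4: "qpoch_inf (A*B) P = ((1 - A*B) * (1 - A*B*P)) * ((1 - A*B*P^2) * (1 - A*B*P^3)) * qpoch_inf (A*P^2*(B*P^2)) P"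
    using qpoch_inf_shift[OF nP(1), of "A*B"] qpoch_inf_shift[OF nP(1), of "A*B*P"]
      qpoch_inf_shift[OF nP(1), of "A*B*P*P"] qpoch_inf_shift[OF nP(1), of "A*B*P*P*P"]
    by (simp add: mult_ac power2_eq_square power3_eq_cube)
  have qABnz: "qpoch_inf (A*B) P \<noteq> 0" by (rule prodinf_qnz[OF nP(1) nAB])
  have C1: "qpoch_inf (B*P) P / qpoch_inf (A*P*(B*P)) P = qpoch_inf B P / qpoch_inf (A*B) P * kap1 A B P"
    unfolding kap1_def
    by (rule C_rel[OF nz(5) nz(6) qABnz nz(3) qB qAB])
  have k2e: "kap2 A B P = ((1 - A*B) * (1 - A*B*P)) * ((1 - A*B*P^2) * (1 - A*B*P^3)) / ((1-B)*(1-B*P))"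
    by (simp add: kap2_def mult.assoc)
  have C2: "qpoch_inf (B*P^2) P / qpoch_inf (A*P^2*(B*P^2)) P = qpoch_inf B P / qpoch_inf (A*B) P * kap2 A B P"
    unfolding k2e
  proof (rule C_rel[OF _ _ qABnz _ qB2 qAB4])
    show "(1 - A*B) * (1 - A*B*P) \<noteq> 0" using nz by simp
    show "(1 - A*B*P^2) * (1 - A*B*P^3) \<noteq> 0" using nz by simp
    show "(1 - B) * (1 - B*P) \<noteq> 0" using nz by simp
  qed
  show ?thesis
    unfolding Phi0 Phi1 Phi2 C1 C2 ct dt S by (simp add: divide_inverse algebra_simps)
qed

lemma qinf_to1:
  fixes P :: complex and a :: "nat \<Rightarrow> complex"
  assumes P: "norm P < 1" and a: "a \<longlonglongrightarrow> 0"
  shows "(\<lambda>n. qpoch_inf (a n) P) \<longlonglongrightarrow> 1"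
proof (rule LIM_zero_cancel, rule Lim_null_comparison)
  show "\<forall>\<^sub>F n in sequentially. norm (qpoch_inf (a n) P - 1) \<le> exp (norm (a n) / (1 - norm P)) - 1"
    by (intro always_eventually allI qpoch_inf_bounds(1)[OF P])
  have "(\<lambda>n. exp (norm (a n) / (1 - norm P)) - 1) \<longlonglongrightarrow> exp (0 / (1 - norm P)) - 1"
    by (intro tendsto_intros tendsto_norm_zero[OF a]) (use P in auto)
  then show "(\<lambda>n. exp (norm (a n) / (1 - norm P)) - 1) \<longlonglongrightarrow> 0" by simp
qed

lemma Kb_mono:
  fixes z p :: complex
  assumes "norm z \<le> Z" "norm p < 1"
  shows "Kb z p \<le> exp (1 / (1 - norm p)) * exp (Z / (1 - norm p))
     * exp (norm p / (1 - norm p)^2) * exp (Z / (1 - norm p))"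
proof -
  have "norm z / (1 - norm p) \<le> Z / (1 - norm p)" using assms by (intro divide_right_mono) auto
  then have e: "exp (norm z / (1 - norm p)) \<le> exp (Z / (1 - norm p))" by simp
  show ?thesis unfolding Kb_def by (intro mult_mono e order_refl) auto
qed

lemma Ser_near1:
  fixes A B z P :: complex and Z KR :: real
  assumes P: "norm P < 1" and A: "norm A \<le> 1" and B: "norm B < 1" and z: "norm z \<le> Z"
    and KR: "KR = exp (1 / (1 - norm P)) * exp (Z / (1 - norm P))
     * exp (norm P / (1 - norm P)^2) * exp (Z / (1 - norm P))"
  shows "norm (Ser A B z P - 1) \<le> (exp (norm A * Z / (1 - norm P)) - 1) + KR * (norm B / (1 - norm B))"
proof -
  have sm: "summable (trm A B z P)" by (rule trm_summable[OF P A B])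
  have bnd: "norm (trm A B z P (Suc k)) \<le> KR * norm B ^ Suc k" for k
    using trm_bound[OF P A, of B z "Suc k"] Kb_mono[OF z P] KR
    by (smt (verit, best) mult_right_mono norm_ge_zero zero_le_power)
  have gs: "(\<lambda>k. KR * norm B ^ Suc k) sums (KR * (norm B / (1 - norm B)))"
  proof -
    have "(\<lambda>k. norm B ^ k) sums (1 / (1 - norm B))" using B by (intro geometric_sums) simp
    then have "(\<lambda>k. norm B * norm B ^ k) sums (norm B * (1 / (1 - norm B)))" by (rule sums_mult)
    then have "(\<lambda>k. KR * (norm B * norm B ^ k)) sums (KR * (norm B * (1 / (1 - norm B))))" by (rule sums_mult)
    then show ?thesis by simp
  qed
  have sn: "summable (\<lambda>k. norm (trm A B z P (Suc k)))"
    by (rule summable_comparison_test'[OF sums_summable[OF gs]]) (use bnd in auto)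
  have tail: "norm (\<Sum>k. trm A B z P (Suc k)) \<le> KR * (norm B / (1 - norm B))"
  proof -
    have "norm (\<Sum>k. trm A B z P (Suc k)) \<le> (\<Sum>k. norm (trm A B z P (Suc k)))" by (rule summable_norm[OF sn])
    also have "\<dots> \<le> (\<Sum>k. KR * norm B ^ Suc k)" by (rule suminf_le[OF bnd sn sums_summable[OF gs]])
    also have "\<dots> = KR * (norm B / (1 - norm B))" using gs by (rule sums_unique[symmetric])
    finally show ?thesis .
  qed
  have head: "norm (trm A B z P 0 - 1) \<le> exp (norm A * Z / (1 - norm P)) - 1"
  proof -
    have h: "trm A B z P 0 = qpoch_inf (-(A*z)) P" by (simp add: trm_def wq_def)
    have "norm (trm A B z P 0 - 1) \<le> exp (norm (-(A*z)) / (1 - norm P)) - 1"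
      unfolding h by (rule qpoch_inf_bounds(1)[OF P])
    also have "norm (-(A*z)) \<le> norm A * Z"
      using z by (simp add: norm_mult mult_left_mono)
    then have "exp (norm (-(A*z)) / (1 - norm P)) \<le> exp (norm A * Z / (1 - norm P))"
      using P by (simp add: divide_right_mono)
    finally show ?thesis by simp
  qed
  have eq: "Ser A B z P - 1 = (trm A B z P 0 - 1) + (\<Sum>k. trm A B z P (Suc k))"
    unfolding Ser_def using suminf_split_head[OF sm] by simp
  have "norm (Ser A B z P - 1) \<le> norm (trm A B z P 0 - 1) + norm (\<Sum>k. trm A B z P (Suc k))"
    unfolding eq by (rule norm_triangle_ineq)
  then show ?thesis using head tail by linarith
qed

lemma Phi_unif:
  fixes p a b R :: real
  assumes p: "0 < p" "p < 1" and ab: "a > -1" "b > -1" and R: "0 \<le> R"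
  shows "\<exists>\<epsilon>. \<epsilon> \<longlonglongrightarrow> 0 \<and> (\<forall>n y. norm y \<le> R \<longrightarrow> norm (Phi p (a + real n) (b + real n) y - 1) \<le> \<epsilon> n)"
proof -
  define P where "P = complex_of_real p"
  define sr where "sr = p powr (1/2)"
  define Z where "Z = sr * R"
  define an where "an = (\<lambda>n::nat. p powr (a+1) * p^n)"
  define bn where "bn = (\<lambda>n::nat. p powr (b+1) * p^n)"
  define An where "An = (\<lambda>n. complex_of_real (an n))"
  define Bn where "Bn = (\<lambda>n. complex_of_real (bn n))"
  define C where "C = (\<lambda>n. qpoch_inf (Bn n) P / qpoch_inf (An n * Bn n) P)"
  define KR where "KR = exp (1 / (1 - norm P)) * exp (Z / (1 - norm P))
     * exp (norm P / (1 - norm P)^2) * exp (Z / (1 - norm P))"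
  define \<delta> where "\<delta> = (\<lambda>n. (exp (an n * Z / (1 - p)) - 1) + KR * (bn n / (1 - bn n)))"
  define \<epsilon> where "\<epsilon> = (\<lambda>n. norm (C n) * \<delta> n + norm (C n - 1))"
  have nP: "norm P < 1" "norm P = p" using p by (auto simp: P_def)
  have pa: "0 < p powr (a+1)" "p powr (a+1) < 1" using p ab by (auto intro: powr_lt1)
  have pb: "0 < p powr (b+1)" "p powr (b+1) < 1" using p ab by (auto intro: powr_lt1)
  have pn: "0 < p^n" "p^n \<le> 1" for n using p by (auto intro: power_le_one)
  have an: "0 < an n" "an n < 1" for n
  proof -
    have h: "p powr (a+1) * p^n \<le> p powr (a+1)" using pn[of n] pa by (intro mult_left_le) auto
    show "an n < 1" unfolding an_def using h pa by linarith
    show "0 < an n" unfolding an_def using pa pn[of n] by simp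
  qed
  have bn: "0 < bn n" "bn n < 1" for n
  proof -
    have h: "p powr (b+1) * p^n \<le> p powr (b+1)" using pn[of n] pb by (intro mult_left_le) auto
    show "bn n < 1" unfolding bn_def using h pb by linarith
    show "0 < bn n" unfolding bn_def using pb pn[of n] by simp
  qed
  have Phin: "Phi p (a + real n) (b + real n) y = C n * Ser (An n) (Bn n) (of_real sr * y) P" for n y
  proof -
    have e1: "p powr (a + real n + 1) = an n"
    proof -
      have "a + real n + 1 = (a+1) + real n" by simp
      then show ?thesis unfolding an_def by (simp only: powr_add powr_realpow[OF p(1)])
    qed
    have e2: "p powr (b + real n + 1) = bn n"
    proof -
      have "b + real n + 1 = (b+1) + real n" by simp
      then show ?thesis unfolding bn_def by (simp only: powr_add powr_realpow[OF p(1)])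
    qed
    show ?thesis using Phi_eq[OF p(1), of "a + real n" "b + real n" y]
      by (simp only: e1 e2 C_def An_def Bn_def P_def sr_def)
  qed
  have bound: "norm (Phi p (a + real n) (b + real n) y - 1) \<le> \<epsilon> n" if y: "norm y \<le> R" for n y
  proof -
    have z: "norm (of_real sr * y) \<le> Z"
      unfolding Z_def using y by (simp add: norm_mult sr_def mult_left_mono)
    have S: "norm (Ser (An n) (Bn n) (of_real sr * y) P - 1) \<le> \<delta> n"
    proof -
      have "norm (Ser (An n) (Bn n) (of_real sr * y) P - 1)
          \<le> (exp (norm (An n) * Z / (1 - norm P)) - 1) + KR * (norm (Bn n) / (1 - norm (Bn n)))"
        by (rule Ser_near1[OF nP(1) _ _ z KR_def]) (use an[of n] bn[of n] in \<open>auto simp: An_def Bn_def\<close>)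
      also have "\<dots> = \<delta> n" using an[of n] bn[of n] by (simp add: \<delta>_def An_def Bn_def nP(2))
      finally show ?thesis .
    qed
    have "Phi p (a + real n) (b + real n) y - 1
        = C n * (Ser (An n) (Bn n) (of_real sr * y) P - 1) + (C n - 1)"
      by (simp add: Phin algebra_simps)
    then have "norm (Phi p (a + real n) (b + real n) y - 1)
        \<le> norm (C n) * norm (Ser (An n) (Bn n) (of_real sr * y) P - 1) + norm (C n - 1)"
      by (metis norm_mult norm_triangle_ineq)
    also have "\<dots> \<le> norm (C n) * \<delta> n + norm (C n - 1)"
      using S by (intro add_right_mono mult_left_mono) auto
    finally show ?thesis by (simp add: \<epsilon>_def)
  qed
  have an0: "an \<longlonglongrightarrow> 0" unfolding an_def
    by (intro tendsto_mult_right_zero LIMSEQ_power_zero) (use p in auto)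
  have bn0: "bn \<longlonglongrightarrow> 0" unfolding bn_def
    by (intro tendsto_mult_right_zero LIMSEQ_power_zero) (use p in auto)
  have An0: "An \<longlonglongrightarrow> 0" unfolding An_def using tendsto_of_real[OF an0] by simp
  have Bn0: "Bn \<longlonglongrightarrow> 0" unfolding Bn_def using tendsto_of_real[OF bn0] by simp
  have ABn0: "(\<lambda>n. An n * Bn n) \<longlonglongrightarrow> 0" using tendsto_mult[OF An0 Bn0] by simp
  have C1: "C \<longlonglongrightarrow> 1"
  proof -
    have "C \<longlonglongrightarrow> 1 / 1" unfolding C_def
      by (intro tendsto_divide qinf_to1[OF nP(1)] Bn0 ABn0) auto
    then show ?thesis by simp
  qed
  have d0: "\<delta> \<longlonglongrightarrow> (exp (0 * Z / (1 - p)) - 1) + KR * (0 / (1 - 0))"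
    unfolding \<delta>_def by (intro tendsto_intros an0 bn0) (use p in auto)
  have "\<epsilon> \<longlonglongrightarrow> norm (1::complex) * ((exp (0 * Z / (1 - p)) - 1) + KR * (0 / (1 - 0))) + norm ((1::complex) - 1)"
    unfolding \<epsilon>_def by (intro tendsto_intros C1 d0)
  then have "\<epsilon> \<longlonglongrightarrow> 0" by simp
  with bound show ?thesis by blast
qed

lemma powr_nat_split:
  fixes p x :: real
  assumes "0 < p"
  shows "p powr (x + real m) = p powr x * p^m"
  using assms by (simp add: powr_add powr_realpow)

lemma frac2_bound:
  fixes N D1 D2 \<delta> :: real
  assumes "0 < \<delta>" "\<delta> \<le> D1" "\<delta> \<le> D2" "0 \<le> N" "N \<le> 2"
  shows "N / (D1 * D2) \<le> 2 / (\<delta> * \<delta>)"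
proof (rule frac_le)
  show "0 < \<delta> * \<delta>" using assms by simp
  show "\<delta> * \<delta> \<le> D1 * D2" using assms by (intro mult_mono) auto
qed (use assms in auto)

lemma bcoef_c_bound:
  fixes p a b :: real
  assumes p: "0 < p" "p < 1" and ab: "a > -1" "b > -1"
  shows "\<exists>K. \<forall>k. \<bar>bcoef_c p a b k\<bar> \<le> K * p^k"
proof -
  define e where "e = a + b + 2"
  define \<delta> where "\<delta> = 1 - p powr e"
  have e0: "0 < e" using ab by (simp add: e_def)
  have d0: "0 < \<delta>" using powr_lt1[OF p e0] by (simp add: \<delta>_def)
  define K where "K = \<bar>1 - p powr (b - a)\<bar> * (2 / (\<delta> * \<delta>)) * p powr (a + 3/2)"
  have "\<bar>bcoef_c p a b k\<bar> \<le> K * p^k" for k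
  proof -
    define X1 where "X1 = p powr (a + b + 2 + 2 * real k)"
    define X2 where "X2 = p powr (a + b + 4 + 2 * real k)"
    define X3 where "X3 = p powr (a + b + 3 + 2 * real k)"
    have X1: "X1 \<le> p powr e" unfolding X1_def e_def using p by (intro powr_mono') auto
    have X2: "X2 \<le> p powr e" unfolding X2_def e_def using p by (intro powr_mono') auto
    have X3: "0 \<le> X3" "X3 \<le> 1" unfolding X3_def using p ab by (auto intro: powr_le1)
    have W: "p powr (a + 3/2 + real k) = p powr (a + 3/2) * p^k" by (rule powr_nat_split[OF p(1)])
    define Fq where "Fq = (1 + X3) / ((1 - X1) * (1 - X2))"
    have F: "Fq \<le> 2 / (\<delta> * \<delta>)" unfolding Fq_def
      by (rule frac2_bound) (use d0 X1 X2 X3 in \<open>auto simp: \<delta>_def\<close>)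
    have F0: "0 \<le> Fq" unfolding Fq_def
      using X1 X2 X3 d0 by (auto simp: \<delta>_def intro!: divide_nonneg_pos mult_pos_pos)
    have "bcoef_c p a b k = (1 - p powr (b - a)) * Fq * (p powr (a + 3/2) * p^k)"
      unfolding bcoef_c_def X1_def X2_def X3_def W Fq_def by simp
    then have "\<bar>bcoef_c p a b k\<bar> = \<bar>1 - p powr (b - a)\<bar> * Fq * (p powr (a + 3/2) * p^k)"
      using F0 p by (simp add: abs_mult)
    also have "\<dots> \<le> \<bar>1 - p powr (b - a)\<bar> * (2 / (\<delta> * \<delta>)) * (p powr (a + 3/2) * p^k)"
      using F p by (intro mult_right_mono mult_left_mono) auto
    finally show ?thesis by (simp add: K_def mult_ac)
  qed
  then show ?thesis by blast
qed

lemma bcoef_d_bound: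
  fixes p a b :: real
  assumes p: "0 < p" "p < 1" and ab: "a > -1" "b > -1"
  shows "\<exists>K. \<forall>k. \<bar>bcoef_d p a b k\<bar> \<le> K * p^k"
proof -
  define e where "e = a + b + 2"
  define \<delta> where "\<delta> = 1 - p powr e"
  have e0: "0 < e" using ab by (simp add: e_def)
  have d0: "0 < \<delta>" using powr_lt1[OF p e0] by (simp add: \<delta>_def)
  have d1: "\<delta> \<le> 1" using p by (simp add: \<delta>_def)
  define K where "K = \<bar>bcoef_d p a b 0\<bar> + p powr e / (\<delta> * \<delta>^2 * \<delta>)"
  have K1: "p powr e / (\<delta> * \<delta>^2 * \<delta>) \<le> K" by (simp add: K_def)
  have K0: "\<bar>bcoef_d p a b 0\<bar> \<le> K" using d0 p by (simp add: K_def)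
  have "\<bar>bcoef_d p a b k\<bar> \<le> K * p^k" for k
  proof (cases k)
    case 0
    then show ?thesis using K0 by simp
  next
    case (Suc m)
    define N1 where "N1 = 1 - p powr (2 * a + 2 + 2 * real k)"
    define N2 where "N2 = 1 - p powr (2 * b + 2 + 2 * real k)"
    define Y where "Y = p powr (2 * real k + a + b + 2)"
    define E1 where "E1 = 1 - p powr (a + b + 1 + 2 * real k)"
    define E2 where "E2 = 1 - p powr (a + b + 2 + 2 * real k)"
    define E3 where "E3 = 1 - p powr (a + b + 3 + 2 * real k)"
    have N1: "0 \<le> N1" "N1 \<le> 1" unfolding N1_def using p ab by (auto intro: powr_le1)
    have N2: "0 \<le> N2" "N2 \<le> 1" unfolding N2_def using p ab by (auto intro: powr_le1)
    have E1: "\<delta> \<le> E1" unfolding E1_def \<delta>_def e_def using p Suc by (auto intro!: powr_mono')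
    have E2: "\<delta> \<le> E2" unfolding E2_def \<delta>_def e_def using p by (auto intro!: powr_mono')
    have E3: "\<delta> \<le> E3" unfolding E3_def \<delta>_def e_def using p by (auto intro!: powr_mono')
    have Y: "Y = p powr e * p^(2*k)"
    proof -
      have "2 * real k + a + b + 2 = e + real (2*k)" by (simp add: e_def)
      then show ?thesis unfolding Y_def by (simp only: powr_nat_split[OF p(1)])
    qed
    have Yk: "Y \<le> p powr e * p^k"
      unfolding Y using p by (intro mult_left_mono power_decreasing) auto
    have Y0: "0 \<le> Y" unfolding Y_def by simp
    have den: "\<delta> * \<delta>^2 * \<delta> \<le> E1 * E2^2 * E3"
      using d0 E1 E2 E3 by (intro mult_mono power_mono) auto
    have dpos: "0 < \<delta> * \<delta>^2 * \<delta>" using d0 by simp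
    have eqd: "bcoef_d p a b k = N1 * N2 * Y / (E1 * E2^2 * E3)"
      unfolding bcoef_d_def N1_def N2_def Y_def E1_def E2_def E3_def ..
    have "\<bar>bcoef_d p a b k\<bar> = N1 * N2 * Y / (E1 * E2^2 * E3)"
      unfolding eqd using N1 N2 Y0 den dpos by (intro abs_of_nonneg divide_nonneg_pos mult_nonneg_nonneg) auto
    also have "\<dots> \<le> Y / (\<delta> * \<delta>^2 * \<delta>)"
    proof (rule frac_le)
      show "N1 * N2 * Y \<le> Y" using N1 N2 Y0
        by (metis mult_le_one mult_left_le mult.commute mult_nonneg_nonneg)
    qed (use Y0 dpos den in auto)
    also have "\<dots> \<le> p powr e * p^k / (\<delta> * \<delta>^2 * \<delta>)"
      using Yk dpos by (intro divide_right_mono) auto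
    also have "\<dots> = (p powr e / (\<delta> * \<delta>^2 * \<delta>)) * p^k" by simp
    also have "\<dots> \<le> K * p^k" using K1 p by (intro mult_right_mono) auto
    finally show ?thesis .
  qed
  then show ?thesis by blast
qed

lemma coef_summable:
  fixes p a b R :: real
  assumes p: "0 < p" "p < 1" and ab: "a > -1" "b > -1" and R: "0 \<le> R"
  shows "summable (\<lambda>k. norm (complex_of_real (bcoef_c p a b k)) * R + norm (complex_of_real (bcoef_d p a b k)) * R^2)"
proof -
  obtain Kc where Kc: "\<And>k. \<bar>bcoef_c p a b k\<bar> \<le> Kc * p^k" using bcoef_c_bound[OF p ab] by blast
  obtain Kd where Kd: "\<And>k. \<bar>bcoef_d p a b k\<bar> \<le> Kd * p^k" using bcoef_d_bound[OF p ab] by blast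
  show ?thesis
  proof (rule summable_comparison_test')
    show "summable (\<lambda>k. (Kc * R + Kd * R^2) * p^k)"
      using p by (intro summable_mult summable_geometric) auto
    fix k
    have "\<bar>bcoef_c p a b k\<bar> * R \<le> Kc * p^k * R" using Kc R by (intro mult_right_mono) auto
    moreover have "\<bar>bcoef_d p a b k\<bar> * R^2 \<le> Kd * p^k * R^2" using Kd R by (intro mult_right_mono) auto
    moreover have "0 \<le> \<bar>bcoef_c p a b k\<bar> * R + \<bar>bcoef_d p a b k\<bar> * R^2" using R by simp
    ultimately show "norm (norm (complex_of_real (bcoef_c p a b k)) * R + norm (complex_of_real (bcoef_d p a b k)) * R^2)
        \<le> (Kc * R + Kd * R^2) * p^k"
      by (simp add: algebra_simps)
  qed
qed

lemma rr_bound: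
  fixes c d :: "nat \<Rightarrow> complex" and a :: "nat \<Rightarrow> real" and x :: complex and R :: real and n :: nat
  assumes ca: "\<And>k. norm (c k) * R + norm (d k) * R^2 \<le> a k" and a0: "\<And>k. 0 \<le> a k"
    and sa: "summable a" and x: "norm x \<le> R" and R: "0 \<le> R"
  shows "norm (fst (rr c d x n)) \<le> exp (suminf a) \<and> norm (snd (rr c d x n)) \<le> exp (suminf a)"
proof -
  have main: "norm (fst (rr c d x n)) \<le> (\<Prod>k<n. 1 + a k) \<and> norm (snd (rr c d x n)) \<le> (\<Prod>k<n. 1 + a k)"
  proof (induction n)
    case 0
    show ?case by simp
  next
    case (Suc n)
    define Pn where "Pn = (\<Prod>k<n. 1 + a k)"
    define f where "f = fst (rr c d x n)"
    define s where "s = snd (rr c d x n)"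
    have P0: "0 \<le> Pn" unfolding Pn_def using a0 by (intro prod_nonneg) (simp add: add_nonneg_nonneg)
    have IH: "norm f \<le> Pn" "norm s \<le> Pn" using Suc.IH by (auto simp: f_def s_def Pn_def)
    have S: "(\<Prod>k<Suc n. 1 + a k) = Pn * (1 + a n)" by (simp add: Pn_def)
    have c1: "norm (1 + c n * x) \<le> 1 + norm (c n) * R"
    proof -
      have "norm (1 + c n * x) \<le> norm (1::complex) + norm (c n * x)" by (rule norm_triangle_ineq)
      also have "norm (c n * x) \<le> norm (c n) * R" using x by (simp add: norm_mult mult_left_mono)
      finally show ?thesis by simp
    qed
    have d1: "norm (d n * x^2) \<le> norm (d n) * R^2"
      using x by (simp add: norm_mult norm_power mult_left_mono power_mono)
    have "norm ((1 + c n * x) * s + d n * x^2 * f) \<le> norm ((1 + c n * x) * s) + norm (d n * x^2 * f)"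
      by (rule norm_triangle_ineq)
    also have "\<dots> \<le> (1 + norm (c n) * R) * Pn + norm (d n) * R^2 * Pn"
    proof (rule add_mono)
      show "norm ((1 + c n * x) * s) \<le> (1 + norm (c n) * R) * Pn"
        unfolding norm_mult using c1 IH(2) R by (intro mult_mono) auto
      show "norm (d n * x^2 * f) \<le> norm (d n) * R^2 * Pn"
        unfolding norm_mult[of "d n * x^2" f] using d1 IH(1) by (intro mult_mono) auto
    qed
    also have "\<dots> = (1 + (norm (c n) * R + norm (d n) * R^2)) * Pn" by (simp add: algebra_simps)
    also have "\<dots> \<le> (1 + a n) * Pn" using ca[of n] P0 by (intro mult_right_mono) auto
    finally have sn: "norm ((1 + c n * x) * s + d n * x^2 * f) \<le> Pn * (1 + a n)" by (simp add: mult.commute)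
    have fn: "norm s \<le> Pn * (1 + a n)" using IH(2) P0 a0[of n]
      by (metis add_increasing2 mult_left_le_one_le mult_right_mono order_trans le_add_same_cancel1 mult_1_right
          mult_left_mono)
    show ?case using sn fn unfolding S f_def s_def by simp
  qed
  have "(\<Prod>k<n. 1 + a k) \<le> exp (\<Sum>k<n. a k)" by (rule prod_le_exp_sum) (use a0 in auto)
  also have "(\<Sum>k<n. a k) \<le> suminf a" by (rule sum_le_suminf[OF sa]) (use a0 in auto)
  then have "exp (\<Sum>k<n. a k) \<le> exp (suminf a)" by simp
  finally show ?thesis using main by auto
qed

lemma conserv:
  fixes F c d :: "nat \<Rightarrow> complex" and x :: complex
  assumes rec: "\<And>n. F n = (1 + c n * x) * F (Suc n) + d (Suc n) * x^2 * F (Suc (Suc n))"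
  shows "F 0 = snd (rr c d x n) * F n + d n * x^2 * fst (rr c d x n) * F (Suc n)"
proof (induction n)
  case 0
  show ?case by simp
next
  case (Suc n)
  have "snd (rr c d x (Suc n)) * F (Suc n) + d (Suc n) * x^2 * fst (rr c d x (Suc n)) * F (Suc (Suc n))
      = snd (rr c d x n) * ((1 + c n * x) * F (Suc n) + d (Suc n) * x^2 * F (Suc (Suc n)))
        + d n * x^2 * fst (rr c d x n) * F (Suc n)"
    by (simp add: algebra_simps)
  also have "\<dots> = snd (rr c d x n) * F n + d n * x^2 * fst (rr c d x n) * F (Suc n)"
    by (simp only: rec[of n, symmetric])
  finally show ?case using Suc.IH by simp
qed

theorem theorem5p1:
  fixes q \<alpha> \<beta> :: real
  assumes "0 < q" "q < 1" "\<alpha> > -1" "\<beta> > -1"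
  shows "\<forall>K :: complex set. compact K \<longrightarrow>
           uniform_limit K (\<lambda>n x. brev (sqrt q) \<alpha> \<beta> n x) (Phi (sqrt q) \<alpha> \<beta>) sequentially"
proof (intro allI impI)
  fix K :: "complex set"
  assume K: "compact K"
  define p where "p = sqrt q"
  have p: "0 < p" "p < 1" using assms by (auto simp: p_def)
  have ab: "\<alpha> > -1" "\<beta> > -1" using assms by auto
  obtain R where R: "R > 0" "\<And>x. x \<in> K \<Longrightarrow> norm x \<le> R"
    using compact_imp_bounded[OF K] unfolding bounded_pos by blast
  define c where "c = (\<lambda>k. complex_of_real (bcoef_c p \<alpha> \<beta> k))"
  define d where "d = (\<lambda>k. complex_of_real (bcoef_d p \<alpha> \<beta> k))"
  define a where "a = (\<lambda>k. norm (c k) * R + norm (d k) * R^2)"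
  have sa: "summable a" unfolding a_def c_def d_def by (rule coef_summable[OF p ab]) (use R in simp)
  have a0: "0 \<le> a k" for k unfolding a_def using R by simp
  define Mb where "Mb = exp (suminf a)"
  have Mb0: "0 \<le> Mb" by (simp add: Mb_def)
  obtain \<epsilon> where \<epsilon>: "\<epsilon> \<longlonglongrightarrow> 0"
    and \<epsilon>b: "\<And>n y. norm y \<le> R \<Longrightarrow> norm (Phi p (\<alpha> + real n) (\<beta> + real n) y - 1) \<le> \<epsilon> n"
    using Phi_unif[OF p ab, of R] R by auto
  define F where "F = (\<lambda>y n. Phi p (\<alpha> + real n) (\<beta> + real n) y)"
  have rec: "F y n = (1 + c n * y) * F y (Suc n) + d (Suc n) * y^2 * F y (Suc (Suc n))" for y n
  proof -
    have cs: "bcoef_c p (\<alpha> + real n) (\<beta> + real n) 0 = bcoef_c p \<alpha> \<beta> n"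
      by (simp add: bcoef_c_def algebra_simps)
    have ds: "bcoef_d p (\<alpha> + real n) (\<beta> + real n) 1 = bcoef_d p \<alpha> \<beta> (Suc n)"
      by (simp add: bcoef_d_def algebra_simps)
    have e1: "\<alpha> + real n + 1 = \<alpha> + real (Suc n)" "\<beta> + real n + 1 = \<beta> + real (Suc n)" by simp_all
    have e2: "\<alpha> + real n + 2 = \<alpha> + real (Suc (Suc n))" "\<beta> + real n + 2 = \<beta> + real (Suc (Suc n))" by simp_all
    have "\<alpha> + real n > -1" "\<beta> + real n > -1" using ab by auto
    from Phi_contig[OF p this, of y] show ?thesis
      unfolding F_def c_def d_def cs ds e1 e2 .
  qed
  have d0: "(\<lambda>n. norm (d n)) \<longlonglongrightarrow> 0"
  proof -
    obtain Kd where Kd: "\<And>k. \<bar>bcoef_d p \<alpha> \<beta> k\<bar> \<le> Kd * p^k" using bcoef_d_bound[OF p ab] by blast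
    show ?thesis
    proof (rule Lim_null_comparison)
      show "\<forall>\<^sub>F n in sequentially. norm (norm (d n)) \<le> Kd * p^n"
        using Kd by (simp add: d_def)
      show "(\<lambda>n. Kd * p^n) \<longlonglongrightarrow> 0"
        by (intro tendsto_mult_right_zero LIMSEQ_power_zero) (use p in auto)
    qed
  qed
  define g where "g = (\<lambda>n. Mb * \<epsilon> n + norm (d n) * R^2 * Mb * (1 + \<epsilon> (Suc n)))"
  have g0: "g \<longlonglongrightarrow> 0"
  proof -
    have e1: "(\<lambda>n. \<epsilon> (Suc n)) \<longlonglongrightarrow> 0" using \<epsilon> by (rule LIMSEQ_Suc)
    have "g \<longlonglongrightarrow> Mb * 0 + 0 * R^2 * Mb * (1 + 0)"
      unfolding g_def by (intro tendsto_intros \<epsilon> d0 e1)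
    then show ?thesis by simp
  qed
  have bnd: "norm (brev p \<alpha> \<beta> n x - Phi p \<alpha> \<beta> x) \<le> g n" if x: "x \<in> K" for n x
  proof -
    have xR: "norm x \<le> R" using R(2)[OF x] .
    define f where "f = fst (rr c d x n)"
    define s where "s = snd (rr c d x n)"
    have fs: "norm f \<le> Mb" "norm s \<le> Mb"
      using rr_bound[of c R d a, OF _ a0 sa xR] R unfolding f_def s_def Mb_def a_def by auto
    have br: "brev p \<alpha> \<beta> n x = s" unfolding s_def c_def d_def by (rule brev_rr)
    have F0: "Phi p \<alpha> \<beta> x = F x 0" by (simp add: F_def)
    have cons: "F x 0 = s * F x n + d n * x^2 * f * F x (Suc n)"
      unfolding s_def f_def by (rule conserv[of "F x" c x d]) (rule rec)
    have Fn: "norm (1 - F x n) \<le> \<epsilon> n" using \<epsilon>b[OF xR, of n] by (simp add: F_def norm_minus_commute)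
    have Fn1: "norm (F x (Suc n)) \<le> 1 + \<epsilon> (Suc n)"
    proof -
      have "norm (F x (Suc n)) \<le> norm (F x (Suc n) - 1) + norm (1::complex)"
        using norm_triangle_ineq[of "F x (Suc n) - 1" 1] by simp
      then show ?thesis using \<epsilon>b[OF xR, of "Suc n"] by (simp add: F_def)
    qed
    have "brev p \<alpha> \<beta> n x - Phi p \<alpha> \<beta> x = s * (1 - F x n) - d n * x^2 * f * F x (Suc n)"
      using cons by (simp add: br F0 algebra_simps)
    then have "norm (brev p \<alpha> \<beta> n x - Phi p \<alpha> \<beta> x) \<le> norm (s * (1 - F x n)) + norm (d n * x^2 * f * F x (Suc n))"
      using norm_triangle_ineq4 by metis
    also have "norm (s * (1 - F x n)) \<le> Mb * \<epsilon> n"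
      unfolding norm_mult using fs Fn Mb0 by (intro mult_mono) auto
    also have "norm (d n * x^2 * f * F x (Suc n)) \<le> norm (d n) * R^2 * Mb * (1 + \<epsilon> (Suc n))"
    proof -
      have "norm (d n * x^2 * f * F x (Suc n)) = norm (d n) * norm x ^ 2 * norm f * norm (F x (Suc n))"
        by (simp add: norm_mult norm_power)
      also have "\<dots> \<le> norm (d n) * R^2 * Mb * (1 + \<epsilon> (Suc n))"
        using xR fs Fn1 Mb0 by (intro mult_mono power_mono mult_nonneg_nonneg) auto
      finally show ?thesis .
    qed
    finally show ?thesis by (simp add: g_def)
  qed
  show "uniform_limit K (\<lambda>n x. brev (sqrt q) \<alpha> \<beta> n x) (Phi (sqrt q) \<alpha> \<beta>) sequentially"
    unfolding p_def[symmetric]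
  proof (rule uniform_limitI)
    fix e :: real assume e: "e > 0"
    have "\<forall>\<^sub>F n in sequentially. g n < e" using order_tendstoD(2)[OF g0 e] .
    then show "\<forall>\<^sub>F n in sequentially. \<forall>x\<in>K. dist (brev p \<alpha> \<beta> n x) (Phi p \<alpha> \<beta> x) < e"
    proof (rule eventually_mono)
      fix n assume "g n < e"
      then show "\<forall>x\<in>K. dist (brev p \<alpha> \<beta> n x) (Phi p \<alpha> \<beta> x) < e"
        using bnd by (auto simp: dist_norm intro: le_less_trans)
    qed
  qed
qed

end
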